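(* Let $n,m\in\mathbb N$, $d:=\min\{n,m\}$, fix an integer $k\in\{1,\dots,d-1\}$ and $\theta\in(0,1)$, and set $\alpha:=k+\theta$. Then $\mathsf P_\alpha$ is not stable under completely positive post-composition: there exist a Hermitian-preserving map $\Phi:\mathbb M_n\to\mathbb M_m$ with $\Phi\in\mathsf P_\alpha$ and a completely positive map $\Gamma:\mathbb M_m\to\mathbb M_m$ such that $\Gamma\circ\Phi\notin\mathsf P_\alpha$. More precisely, if $\Phi\in\mathsf P_\alpha\setminus\mathsf P_{k+1}$, then there exists $A\in\mathbb M_m$ such that $\mathrm{Ad}_A\circ\Phi\notin\mathsf P_\alpha$, where $\mathrm{Ad}_A(Y)=AYA^\ast$.
   Context: The Choi matrix of a linear $\Phi:\mathbb M_n\to\mathbb M_m$ is $C_\Phi=\sum_{i,j=1}^nE_{ij}\otimes\Phi(E_{ij})$, with $E_{ij}$ the matrix units of $\mathbb M_n$. For $\psi=\sum_{i,j}a_{ij}e_i\otimes f_j\in\mathbb C^n\otimes\mathbb C^m$ (standard bases), its Schmidt coefficients $s_1(\psi)\ge\dots\ge s_d(\psi)\ge0$ are the singular values of $[a_{ij}]$. For $\beta\in[1,d]$ with $k'=\lfloor\beta\rfloor$, $\theta'=\beta-k'$, $r'=\lceil\beta\rceil$, a unit vector $\psi$ is $\beta$-admissible if $s_j(\psi)=0$ for $j\ge r'+1$ and, when $\theta'>0$, $s_{k'+1}(\psi)\le\frac{\theta'}{k'}\sum_{j=1}^{k'}s_j(\psi)$; $\mathcal V_\beta$ is the set of these. A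 Hermitian-preserving map $\Phi$ belongs to $\mathsf P_\beta$ ($\beta$-positive) if $\langle\psi,C_\Phi\psi\rangle\ge0$ for all $\psi\in\mathcal V_\beta$. (For integer $\beta$ this is $\beta$-positivity in the usual sense.) *)

theory Defs
  imports "Jordan_Normal_Form.Char_Poly" "Jordan_Normal_Form.Conjugate"
begin

text \<open>The tensor product C^n (x) C^m is
  identified with C^(n*m) via e_i (x) f_p  |->  basis vector number i*m+p
  (Kronecker ordering, 0-based indices).\<close>

definition cadj :: "complex mat \<Rightarrow> complex mat" where
  "cadj A = mat (dim_col A) (dim_row A) (\<lambda>(i,j). cnj (A $$ (j,i)))"

definition munit :: "nat \<Rightarrow> nat \<Rightarrow> nat \<Rightarrow> complex mat" where
  "munit n i j = mat n n (\<lambda>(p,q). if p = i \<and> q = j then 1 else 0)"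

definition qform :: "complex mat \<Rightarrow> complex vec \<Rightarrow> complex" where
  "qform X v = (\<Sum>i<dim_vec v. \<Sum>j<dim_vec v. cnj (v $ i) * X $$ (i,j) * v $ j)"

definition psd :: "nat \<Rightarrow> complex mat \<Rightarrow> bool" where
  "psd N X \<longleftrightarrow> X \<in> carrier_mat N N \<and> (\<forall>v \<in> carrier_vec N. qform X v \<ge> 0)"

definition lin_map :: "nat \<Rightarrow> nat \<Rightarrow> (complex mat \<Rightarrow> complex mat) \<Rightarrow> bool" where
  "lin_map n m \<Phi> \<longleftrightarrow>
     (\<forall>X \<in> carrier_mat n n. \<Phi> X \<in> carrier_mat m m) \<and>
     (\<forall>X \<in> carrier_mat n n. \<forall>Y \<in> carrier_mat n n. \<Phi> (X + Y) = \<Phi> X + \<Phi> Y) \<and>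
     (\<forall>X \<in> carrier_mat n n. \<forall>c::complex. \<Phi> (c \<cdot>\<^sub>m X) = c \<cdot>\<^sub>m \<Phi> X)"

definition herm_pres :: "nat \<Rightarrow> nat \<Rightarrow> (complex mat \<Rightarrow> complex mat) \<Rightarrow> bool" where
  "herm_pres n m \<Phi> \<longleftrightarrow> lin_map n m \<Phi> \<and>
     (\<forall>X \<in> carrier_mat n n. cadj X = X \<longrightarrow> cadj (\<Phi> X) = \<Phi> X)"

text \<open>Choi matrix  C_Phi = sum_ij E_ij (x) Phi(E_ij)  (Kronecker ordering).\<close>
definition choi :: "nat \<Rightarrow> nat \<Rightarrow> (complex mat \<Rightarrow> complex mat) \<Rightarrow> complex mat" where
  "choi n m \<Phi> = mat (n*m) (n*m)
     (\<lambda>(a,b). \<Phi> (munit n (a div m) (b div m)) $$ (a mod m, b mod m))"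

text \<open>Coefficient matrix [a_ij] of psi = sum a_ij e_i (x) f_j.\<close>
definition coeff_mat :: "nat \<Rightarrow> nat \<Rightarrow> complex vec \<Rightarrow> complex mat" where
  "coeff_mat n m \<psi> = mat n m (\<lambda>(i,j). \<psi> $ (i*m + j))"

text \<open>Eigenvalues (with multiplicity, in decreasing order) of a matrix whose
  characteristic polynomial splits over the reals (e.g. a Hermitian matrix).\<close>
definition eigs_desc :: "complex mat \<Rightarrow> real list" where
  "eigs_desc M = (THE ls. length ls = dim_row M \<and> sorted_wrt (\<ge>) ls \<and>
      char_poly M = prod_list (map (\<lambda>a. [:- complex_of_real a, 1:]) ls))"

text \<open>Schmidt coefficients s_1(psi) >= ... >= s_d(psi), d = min n m (1-based index j):
  the singular values of [a_ij], i.e. square roots of the eigenvalues of A A^*.\<close>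
definition schmidt :: "nat \<Rightarrow> nat \<Rightarrow> complex vec \<Rightarrow> nat \<Rightarrow> real" where
  "schmidt n m \<psi> j =
     (let A = coeff_mat n m \<psi> in
      if 1 \<le> j \<and> j \<le> min n m then sqrt (eigs_desc (A * cadj A) ! (j - 1)) else 0)"

definition admissible :: "nat \<Rightarrow> nat \<Rightarrow> real \<Rightarrow> complex vec \<Rightarrow> bool" where
  "admissible n m \<beta> \<psi> \<longleftrightarrow>
     (let k' = nat \<lfloor>\<beta>\<rfloor>; \<theta>' = \<beta> - real k'; r' = nat \<lceil>\<beta>\<rceil>; d = min n m in
      \<psi> \<in> carrier_vec (n*m) \<and>
      (\<Sum>i<n*m. (cmod (\<psi> $ i))\<^sup>2) = 1 \<and>
      (\<forall>j. r' + 1 \<le> j \<and> j \<le> d \<longrightarrow> schmidt n m \<psi> j = 0) \<and>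
      (\<theta>' > 0 \<longrightarrow> schmidt n m \<psi> (k' + 1) \<le> \<theta>' / real k' * (\<Sum>j=1..k'. schmidt n m \<psi> j)))"

definition beta_pos :: "nat \<Rightarrow> nat \<Rightarrow> real \<Rightarrow> (complex mat \<Rightarrow> complex mat) \<Rightarrow> bool" where
  "beta_pos n m \<beta> \<Phi> \<longleftrightarrow> herm_pres n m \<Phi> \<and>
     (\<forall>\<psi>. admissible n m \<beta> \<psi> \<longrightarrow> qform (choi n m \<Phi>) \<psi> \<ge> 0)"

definition mblock :: "nat \<Rightarrow> complex mat \<Rightarrow> nat \<Rightarrow> nat \<Rightarrow> complex mat" where
  "mblock m X i j = mat m m (\<lambda>(p,q). X $$ (i*m + p, j*m + q))"

text \<open>Completely positive maps M_m -> M_m: id_k (x) Gamma is positive for every k.\<close>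
definition compl_pos :: "nat \<Rightarrow> (complex mat \<Rightarrow> complex mat) \<Rightarrow> bool" where
  "compl_pos m \<Gamma> \<longleftrightarrow> lin_map m m \<Gamma> \<and>
     (\<forall>k X. psd (k*m) X \<longrightarrow>
        psd (k*m) (mat (k*m) (k*m)
           (\<lambda>(a,b). \<Gamma> (mblock m X (a div m) (b div m)) $$ (a mod m, b mod m))))"

definition Ad :: "complex mat \<Rightarrow> complex mat \<Rightarrow> complex mat" where
  "Ad A Y = A * Y * cadj A"

end

theory Submission
  imports Defs "Jordan_Normal_Form.Schur_Decomposition" "HOL-Combinatorics.List_Permutation"
begin

lemma mult_idx:
  assumes "A \<in> carrier_mat a b" "B \<in> carrier_mat b c" "i < a" "j < c"
  shows "(A * B) $$ (i,j) = (\<Sum>l<b. A $$ (i,l) * B $$ (l,j))"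
  using assms by (auto simp: scalar_prod_def atLeast0LessThan intro!: sum.cong)

lemma cadj_dims[simp]: "dim_row (cadj A) = dim_col A" "dim_col (cadj A) = dim_row A"
  by (auto simp: cadj_def)

lemma cadj_carrier[simp]: "A \<in> carrier_mat a b \<Longrightarrow> cadj A \<in> carrier_mat b a"
  by (auto simp: cadj_def)

lemma cadj_idx[simp]: "i < dim_col A \<Longrightarrow> j < dim_row A \<Longrightarrow> cadj A $$ (i,j) = cnj (A $$ (j,i))"
  by (auto simp: cadj_def)

lemma cadj_cadj[simp]: "cadj (cadj A) = A"
  by (rule eq_matI) (auto simp: cadj_def)

lemma cadj_mult:
  assumes "A \<in> carrier_mat a b" "B \<in> carrier_mat b c"
  shows "cadj (A * B) = cadj B * cadj A"
proof (rule eq_matI)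
  fix i j assume "i < dim_row (cadj B * cadj A)" "j < dim_col (cadj B * cadj A)"
  then have ij: "i < c" "j < a" using assms by auto
  have "cadj (A * B) $$ (i,j) = cnj ((A*B) $$ (j,i))" using ij assms by simp
  also have "\<dots> = (\<Sum>l<b. cnj (A $$ (j,l)) * cnj (B $$ (l,i)))"
    using mult_idx[OF assms ij(2) ij(1)] by (simp add: cnj_sum)
  also have "\<dots> = (cadj B * cadj A) $$ (i,j)"
    using assms ij by (subst mult_idx[of _ c b _ a]) (auto simp: mult.commute intro!: sum.cong)
  finally show "cadj (A * B) $$ (i,j) = (cadj B * cadj A) $$ (i,j)" .
qed (use assms in auto)

definition unitary :: "nat \<Rightarrow> complex mat \<Rightarrow> bool" where
  "unitary n U \<longleftrightarrow> U \<in> carrier_mat n n \<and> cadj U * U = 1\<^sub>m n \<and> U * cadj U = 1\<^sub>m n"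

lemma unitary_cols:
  assumes "unitary n U" "a < n" "b < n"
  shows "(\<Sum>l<n. cnj (U $$ (l,a)) * U $$ (l,b)) = (if a = b then 1 else 0)"
proof -
  have U: "U \<in> carrier_mat n n" and e: "cadj U * U = 1\<^sub>m n" using assms unfolding unitary_def by auto
  have "(cadj U * U) $$ (a,b) = (\<Sum>l<n. cnj (U $$ (l,a)) * U $$ (l,b))"
    using U assms by (subst mult_idx[of _ n n _ n]) auto
  then show ?thesis using e assms by auto
qed

lemma unitary_rows:
  assumes "unitary n U" "a < n" "b < n"
  shows "(\<Sum>l<n. U $$ (a,l) * cnj (U $$ (b,l))) = (if a = b then 1 else 0)"
proof -
  have U: "U \<in> carrier_mat n n" and e: "U * cadj U = 1\<^sub>m n" using assms unfolding unitary_def by auto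
  have "(U * cadj U) $$ (a,b) = (\<Sum>l<n. U $$ (a,l) * cnj (U $$ (b,l)))"
    using U assms by (subst mult_idx[of _ n n _ n]) auto
  then show ?thesis using e assms by auto
qed

lemma unitary_mult:
  assumes "unitary n U" "unitary n V"
  shows "unitary n (U * V)"
proof -
  have U: "U \<in> carrier_mat n n" "cadj U * U = 1\<^sub>m n" "U * cadj U = 1\<^sub>m n"
    and V: "V \<in> carrier_mat n n" "cadj V * V = 1\<^sub>m n" "V * cadj V = 1\<^sub>m n"
    using assms unfolding unitary_def by auto
  have c: "cadj (U * V) = cadj V * cadj U" using cadj_mult[OF U(1) V(1)] .
  have "cadj V * cadj U * (U * V) = cadj V * (cadj U * (U * V))"
    using U V by (intro assoc_mult_mat[of _ n n _ n _ n]) auto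
  also have "cadj U * (U * V) = (cadj U * U) * V"
    using U V by (intro assoc_mult_mat[symmetric, of _ n n _ n _ n]) auto
  also have "cadj V * ((cadj U * U) * V) = 1\<^sub>m n" using U V by simp
  finally have 1: "cadj (U*V) * (U*V) = 1\<^sub>m n" using c by simp
  have "U * V * (cadj V * cadj U) = U * (V * (cadj V * cadj U))"
    using U V by (intro assoc_mult_mat[of _ n n _ n _ n]) auto
  also have "V * (cadj V * cadj U) = (V * cadj V) * cadj U"
    using U V by (intro assoc_mult_mat[symmetric, of _ n n _ n _ n]) auto
  also have "U * ((V * cadj V) * cadj U) = 1\<^sub>m n" using U V by simp
  finally have 2: "(U*V) * cadj (U*V) = 1\<^sub>m n" using c by simp
  show ?thesis unfolding unitary_def using 1 2 U V by auto
qed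

definition dmat :: "nat \<Rightarrow> (nat \<Rightarrow> real) \<Rightarrow> complex mat" where
  "dmat n t = mat n n (\<lambda>(i,j). if i = j then complex_of_real (t i) else 0)"

lemma dmat_carrier[simp]: "dmat n t \<in> carrier_mat n n" by (simp add: dmat_def)

lemma udu_idx:
  assumes "U \<in> carrier_mat n n" "i < n" "j < n"
  shows "(U * dmat n t * cadj U) $$ (i,j) = (\<Sum>l<n. U $$ (i,l) * of_real (t l) * cnj (U $$ (j,l)))"
proof -
  have "(U * dmat n t * cadj U) $$ (i,j) = (\<Sum>l<n. (U * dmat n t) $$ (i,l) * cadj U $$ (l,j))"
    using assms by (subst mult_idx[of _ n n _ n]) auto
  also have "\<dots> = (\<Sum>l<n. U $$ (i,l) * of_real (t l) * cnj (U $$ (j,l)))"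
  proof (rule sum.cong[OF refl])
    fix l assume l: "l \<in> {..<n}"
    have "(U * dmat n t) $$ (i,l) = (\<Sum>p<n. U $$ (i,p) * dmat n t $$ (p,l))"
      using assms l by (subst mult_idx[of _ n n _ n]) auto
    also have "\<dots> = (\<Sum>p<n. if p = l then U $$ (i,l) * of_real (t l) else 0)"
      using l by (intro sum.cong) (auto simp: dmat_def)
    also have "\<dots> = U $$ (i,l) * of_real (t l)" using l by simp
    finally show "(U * dmat n t) $$ (i,l) * cadj U $$ (l,j) = U $$ (i,l) * of_real (t l) * cnj (U $$ (j,l))"
      using assms l by simp
  qed
  finally show ?thesis .
qed

lemma cscalar_sum:
  assumes "v \<in> carrier_vec N" "w \<in> carrier_vec N"
  shows "v \<bullet>c w = (\<Sum>l<N. v $ l * cnj (w $ l))"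
  using assms by (auto simp: scalar_prod_def atLeast0LessThan intro!: sum.cong)

lemma cnj_mult_self: "z * cnj z = complex_of_real ((cmod z)\<^sup>2)"
  using complex_norm_square[of z] by simp

lemma onb_exists:
  assumes v: "v \<in> carrier_vec N" and v0: "v \<noteq> 0\<^sub>v N"
  shows "\<exists>W c. unitary N W \<and> c \<noteq> 0 \<and> (\<forall>i<N. W $$ (i,0) = c * v $ i)"
proof -
  interpret cof_vec_space N "TYPE(complex)" .
  define b where "b = basis_completion v"
  from basis_completion[OF v v0, folded b_def]
  have dist_b: "distinct b" and indep: "\<not> lin_dep (set b)" and bc: "set b \<subseteq> carrier_vec N"
    and hdb: "hd b = v" and len_b: "length b = N" by auto
  have N0: "N \<noteq> 0" using v v0 by auto
  from hdb len_b N0 obtain vs where bv: "b = v # vs" by (cases b, auto)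
  define ws where "ws = gram_schmidt N b"
  from gram_schmidt_result[OF bc dist_b indep ws_def]
  have orth: "corthogonal ws" and wsc: "set ws \<subseteq> carrier_vec N" and lenw: "length ws = N"
    by (auto simp: len_b)
  have hdws: "hd ws = v" unfolding ws_def bv using gram_schmidt_hd[OF v] by simp
  have ws0: "ws ! 0 = v" using hdws lenw N0 by (cases ws) auto
  have wsj: "ws ! j \<in> carrier_vec N" if "j < N" for j using wsc lenw that by auto
  define s where "s j = (\<Sum>l<N. (cmod (ws ! j $ l))\<^sup>2)" for j
  have cs: "ws ! a \<bullet>c ws ! b = (\<Sum>l<N. ws ! a $ l * cnj (ws ! b $ l))" if "a < N" "b < N" for a b
    using cscalar_sum[OF wsj[OF that(1)] wsj[OF that(2)]] .
  have ss: "ws ! j \<bullet>c ws ! j = complex_of_real (s j)" if "j < N" for j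
    unfolding cs[OF that that] s_def by (simp add: cnj_mult_self)
  have spos: "s j > 0" if "j < N" for j
  proof -
    have "ws ! j \<bullet>c ws ! j \<noteq> 0" using corthogonalD[OF orth, of j j] that lenw by auto
    then have "s j \<noteq> 0" using ss[OF that] by auto
    moreover have "s j \<ge> 0" unfolding s_def by (auto intro: sum_nonneg)
    ultimately show ?thesis by auto
  qed
  define r where "r j = complex_of_real (sqrt (s j))" for j
  have r0: "r j \<noteq> 0" if "j < N" for j using spos[OF that] by (auto simp: r_def)
  have rr: "cnj (r j) * r j = complex_of_real (s j)" if "j < N" for j
    using spos[OF that] by (simp add: r_def flip: of_real_mult)
  define W where "W = mat N N (\<lambda>(i,j). ws ! j $ i / r j)"
  have W: "W \<in> carrier_mat N N" by (simp add: W_def)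
  have WW: "cadj W * W = 1\<^sub>m N"
  proof (rule eq_matI)
    fix a b assume "a < dim_row (1\<^sub>m N)" "b < dim_col (1\<^sub>m N)"
    then have ab: "a < N" "b < N" by auto
    have "(cadj W * W) $$ (a,b) = (\<Sum>l<N. cnj (W $$ (l,a)) * W $$ (l,b))"
      using W ab by (subst mult_idx[of _ N N _ N]) auto
    also have "\<dots> = (\<Sum>l<N. ws ! b $ l * cnj (ws ! a $ l)) / (cnj (r a) * r b)"
      using ab by (auto simp: W_def sum_divide_distrib intro!: sum.cong)
    also have "\<dots> = (ws ! b \<bullet>c ws ! a) / (cnj (r a) * r b)" using cs ab by simp
    also have "\<dots> = 1\<^sub>m N $$ (a,b)"
    proof (cases "a = b")
      case True
      then show ?thesis using ss[OF ab(1)] rr[OF ab(1)] spos[OF ab(1)] ab by auto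
    next
      case False
      then have "ws ! b \<bullet>c ws ! a = 0" using corthogonalD[OF orth, of b a] ab lenw by auto
      then show ?thesis using False ab by simp
    qed
    finally show "(cadj W * W) $$ (a,b) = 1\<^sub>m N $$ (a,b)" .
  qed (use W in auto)
  have WW2: "W * cadj W = 1\<^sub>m N"
    using mat_mult_left_right_inverse[OF cadj_carrier[OF W] W WW] .
  have "unitary N W" unfolding unitary_def using W WW WW2 by auto
  moreover have "\<forall>i<N. W $$ (i,0) = (1 / r 0) * v $ i"
    using N0 ws0 by (auto simp: W_def)
  moreover have "1 / r 0 \<noteq> 0" using r0 N0 by auto
  ultimately show ?thesis by blast
qed

lemma mult_carrier_sq[simp]: "A \<in> carrier_mat n n \<Longrightarrow> B \<in> carrier_mat n n \<Longrightarrow> A * B \<in> carrier_mat n n"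
  by (rule mult_carrier_mat)

lemma herm_conj:
  assumes H: "H \<in> carrier_mat n n" and W: "W \<in> carrier_mat n n" and h: "cadj H = H"
  shows "cadj (cadj W * H * W) = cadj W * H * W"
proof -
  have "cadj (cadj W * H * W) = cadj W * cadj (cadj W * H)"
    using cadj_mult[OF mult_carrier_mat[OF cadj_carrier[OF W] H] W] .
  also have "cadj (cadj W * H) = cadj H * W" using cadj_mult[of "cadj W" n n H n] H W by auto
  finally show ?thesis using h H W cadj_carrier[OF W] by (simp add: assoc_mult_mat[of _ n n _ n _ n])
qed

lemma spectral:
  assumes "H \<in> carrier_mat n n" "cadj H = H"
  shows "\<exists>U t. unitary n U \<and> H = U * dmat n t * cadj U"
  using assms
proof (induction n arbitrary: H)
  case 0
  have "unitary 0 (1\<^sub>m 0)" unfolding unitary_def by (auto intro!: eq_matI)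
  moreover have "H = 1\<^sub>m 0 * dmat 0 t * cadj (1\<^sub>m 0)" for t using 0 by (auto intro!: eq_matI)
  ultimately show ?case by blast
next
  case (Suc n)
  define N where "N = Suc n"
  have H: "H \<in> carrier_mat N N" and hH: "cadj H = H" using Suc N_def by auto
  obtain as where cp: "char_poly H = (\<Prod>a\<leftarrow>as. [:- a, 1:])" and las: "length as = N"
    using char_poly_factorized[OF H] by blast
  then obtain e as' where asd: "as = e # as'" unfolding N_def by (cases as) auto
  have "poly (char_poly H) e = 0" unfolding cp asd by simp
  then have "eigenvalue H e" using eigenvalue_root_char_poly[OF H] by simp
  from find_eigenvector[OF H this] obtain v where ev: "eigenvector H v e" by blast
  then have v: "v \<in> carrier_vec N" and v0: "v \<noteq> 0\<^sub>v N" and Hv: "H *\<^sub>v v = e \<cdot>\<^sub>v v"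
    unfolding eigenvector_def using H by auto
  from onb_exists[OF v v0] obtain W c where uW: "unitary N W" and c0: "c \<noteq> 0"
    and W0: "\<forall>i<N. W $$ (i,0) = c * v $ i" by blast
  have W: "W \<in> carrier_mat N N" and WW: "cadj W * W = 1\<^sub>m N" and WW2: "W * cadj W = 1\<^sub>m N"
    using uW unfolding unitary_def by auto
  define H1 where "H1 = cadj W * H * W"
  have H1: "H1 \<in> carrier_mat N N" using H W by (auto simp: H1_def intro!: mult_carrier_mat)
  have hH1: "cadj H1 = H1" unfolding H1_def by (rule herm_conj[OF H W hH])
  have HW0: "(H * W) $$ (l,0) = e * W $$ (l,0)" if l: "l < N" for l
  proof -
    have "(H * W) $$ (l,0) = (\<Sum>p<N. H $$ (l,p) * W $$ (p,0))"
      using H W l by (subst mult_idx[of _ N N _ N]) (auto simp: N_def)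
    also have "\<dots> = c * (\<Sum>p<N. H $$ (l,p) * v $ p)"
      using W0 by (auto simp: sum_distrib_left intro!: sum.cong)
    also have "(\<Sum>p<N. H $$ (l,p) * v $ p) = (H *\<^sub>v v) $ l"
      using H v l by (auto simp: scalar_prod_def atLeast0LessThan intro!: sum.cong)
    also have "\<dots> = e * v $ l" using Hv v l by simp
    finally show ?thesis using W0 l by simp
  qed
  have H1col: "H1 $$ (i,0) = (if i = 0 then e else 0)" if i: "i < N" for i
  proof -
    have "H1 = cadj W * (H * W)" unfolding H1_def using H W by (intro assoc_mult_mat[of _ N N _ N _ N]) auto
    then have "H1 $$ (i,0) = (cadj W * (H * W)) $$ (i,0)" by simp
    also have "\<dots> = (\<Sum>l<N. cadj W $$ (i,l) * (H * W) $$ (l,0))"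
      by (rule mult_idx[of _ N N _ N]) (use H W i in \<open>auto simp: N_def\<close>)
    also have "\<dots> = e * (\<Sum>l<N. cnj (W $$ (l,i)) * W $$ (l,0))"
      using HW0 W i by (auto simp: sum_distrib_left intro!: sum.cong)
    also have "\<dots> = (if i = 0 then e else 0)"
      using unitary_cols[OF uW i, of 0] by (simp add: N_def)
    finally show ?thesis .
  qed
  have ereal: "cnj e = e"
  proof -
    have "cadj H1 $$ (0,0) = cnj (H1 $$ (0,0))" using H1 by (simp add: N_def)
    then show ?thesis using hH1 H1col[of 0] by (simp add: N_def)
  qed
  have H1row: "H1 $$ (0,j) = (if j = 0 then e else 0)" if j: "j < N" for j
  proof -
    have "H1 $$ (0,j) = cadj H1 $$ (0,j)" using hH1 by simp
    also have "\<dots> = cnj (H1 $$ (j,0))" using H1 j by (simp add: N_def)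
    finally show ?thesis using H1col[OF j] ereal by auto
  qed
  define H' where "H' = mat n n (\<lambda>(i,j). H1 $$ (Suc i, Suc j))"
  have H': "H' \<in> carrier_mat n n" by (simp add: H'_def)
  have hH': "cadj H' = H'"
  proof (rule eq_matI)
    fix i j assume "i < dim_row H'" "j < dim_col H'"
    then have ij: "i < n" "j < n" by (auto simp: H'_def)
    have "cadj H1 $$ (Suc i, Suc j) = cnj (H1 $$ (Suc j, Suc i))" using H1 ij by (simp add: N_def)
    then show "cadj H' $$ (i,j) = H' $$ (i,j)" using hH1 ij by (simp add: H'_def)
  qed (auto simp: H'_def)
  from Suc.IH[OF H' hH'] obtain U' t' where uU': "unitary n U'" and H'eq: "H' = U' * dmat n t' * cadj U'"
    by blast
  have U': "U' \<in> carrier_mat n n" using uU' unfolding unitary_def by auto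
  define V where "V = mat N N (\<lambda>(i,j). if i = 0 \<and> j = 0 then 1 else if i = 0 \<or> j = 0 then 0
     else U' $$ (i - 1, j - 1))"
  have V: "V \<in> carrier_mat N N" by (simp add: V_def)
  have VV: "cadj V * V = 1\<^sub>m N"
  proof (rule eq_matI)
    fix a b assume "a < dim_row (1\<^sub>m N)" "b < dim_col (1\<^sub>m N)"
    then have ab: "a < N" "b < N" by auto
    have "(cadj V * V) $$ (a,b) = (\<Sum>l<N. cnj (V $$ (l,a)) * V $$ (l,b))"
      using V ab by (subst mult_idx[of _ N N _ N]) auto
    also have "\<dots> = cnj (V $$ (0,a)) * V $$ (0,b) + (\<Sum>l<n. cnj (V $$ (Suc l,a)) * V $$ (Suc l,b))"
      unfolding N_def by (rule sum.lessThan_Suc_shift)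
    also have "\<dots> = 1\<^sub>m N $$ (a,b)"
    proof (cases "a = 0 \<or> b = 0")
      case True
      then show ?thesis using ab by (auto simp: V_def N_def)
    next
      case False
      then have "(\<Sum>l<n. cnj (V $$ (Suc l,a)) * V $$ (Suc l,b)) =
          (\<Sum>l<n. cnj (U' $$ (l,a - 1)) * U' $$ (l,b - 1))"
        using ab by (auto simp: V_def N_def intro!: sum.cong)
      also have "\<dots> = (if a - 1 = b - 1 then 1 else 0)"
        using unitary_cols[OF uU', of "a - 1" "b - 1"] False ab by (auto simp: N_def)
      finally show ?thesis using False ab by (auto simp: V_def N_def)
    qed
    finally show "(cadj V * V) $$ (a,b) = 1\<^sub>m N $$ (a,b)" .
  qed (use V in auto)
  have VV2: "V * cadj V = 1\<^sub>m N" using mat_mult_left_right_inverse[OF cadj_carrier[OF V] V VV] .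
  have uV: "unitary N V" unfolding unitary_def using V VV VV2 by auto
  define t where "t l = (if l = 0 then Re e else t' (l - 1))" for l
  have e_re: "complex_of_real (Re e) = e" using ereal by (metis Reals_cnj_iff complex_is_Real_iff of_real_Re)
  have H1eq: "H1 = V * dmat N t * cadj V"
  proof (rule eq_matI)
    fix i j assume "i < dim_row (V * dmat N t * cadj V)" "j < dim_col (V * dmat N t * cadj V)"
    then have ij: "i < N" "j < N" using V by auto
    have "(V * dmat N t * cadj V) $$ (i,j) = (\<Sum>l<N. V $$ (i,l) * of_real (t l) * cnj (V $$ (j,l)))"
      by (rule udu_idx[OF V ij])
    also have "\<dots> = V $$ (i,0) * of_real (t 0) * cnj (V $$ (j,0)) +
        (\<Sum>l<n. V $$ (i,Suc l) * of_real (t (Suc l)) * cnj (V $$ (j,Suc l)))"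
      unfolding N_def by (rule sum.lessThan_Suc_shift)
    also have "\<dots> = H1 $$ (i,j)"
    proof (cases "i = 0 \<or> j = 0")
      case True
      then show ?thesis using ij H1row H1col e_re by (auto simp: V_def N_def t_def)
    next
      case False
      then have "(\<Sum>l<n. V $$ (i,Suc l) * of_real (t (Suc l)) * cnj (V $$ (j,Suc l))) =
          (\<Sum>l<n. U' $$ (i - 1,l) * of_real (t' l) * cnj (U' $$ (j - 1,l)))"
        using ij by (auto simp: V_def N_def t_def intro!: sum.cong)
      also have "\<dots> = H' $$ (i - 1, j - 1)"
        unfolding H'eq using ij False by (subst udu_idx[OF U']) (auto simp: N_def)
      also have "\<dots> = H1 $$ (i,j)" using ij False by (auto simp: H'_def N_def)
      finally show ?thesis using False ij by (auto simp: V_def N_def)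
    qed
    finally show "H1 $$ (i,j) = (V * dmat N t * cadj V) $$ (i,j)" by simp
  qed (use H1 V in auto)
  have "W * H1 * cadj W = (W * cadj W) * H * (W * cadj W)"
    unfolding H1_def using W H cadj_carrier[OF W] by (simp add: assoc_mult_mat[of _ N N _ N _ N])
  then have HH: "H = W * H1 * cadj W" using WW2 H by simp
  have cWV: "cadj (W * V) = cadj V * cadj W" by (rule cadj_mult[OF W V])
  have "H = (W * V) * dmat N t * cadj (W * V)"
    unfolding HH H1eq cWV using W V cadj_carrier[OF W] cadj_carrier[OF V] by (simp add: assoc_mult_mat[of _ N N _ N _ N])
  moreover have "unitary N (W * V)" by (rule unitary_mult[OF uW uV])
  ultimately show ?case unfolding N_def by blast
qed

abbreviation lfac :: "real \<Rightarrow> complex poly" where "lfac a \<equiv> [:- complex_of_real a, 1:]"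

lemma order_lfac: "Polynomial.order (complex_of_real x) (lfac a) = (if x = a then 1 else 0)"
proof (cases "x = a")
  case True
  then show ?thesis using order_power_n_n[of "complex_of_real a" 1] by simp
next
  case False
  have "poly (lfac a) (complex_of_real x) \<noteq> 0" using False by simp
  then show ?thesis using False by (simp add: order_0I)
qed

lemma prod_lfac_nz: "prod_list (map lfac xs) \<noteq> 0"
  unfolding prod_list_zero_iff by auto

lemma order_prod_lfac: "Polynomial.order (complex_of_real x) (prod_list (map lfac xs)) = count (mset xs) x"
proof (induct xs)
  case Nil
  then show ?case by (simp add: order_0I)
next
  case (Cons a xs)
  have eq: "prod_list (map lfac (a # xs)) = lfac a * prod_list (map lfac xs)"
    by (simp only: list.map prod_list.Cons)
  have "Polynomial.order (complex_of_real x) (prod_list (map lfac (a # xs))) =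
      Polynomial.order (complex_of_real x) (lfac a) + Polynomial.order (complex_of_real x) (prod_list (map lfac xs))"
    unfolding eq by (rule order_mult, metis eq prod_lfac_nz)
  then show ?case using Cons order_lfac[of x a] by auto
qed

lemma prod_lfac_mset: "prod_list (map lfac xs) = prod_list (map lfac ys) \<Longrightarrow> mset xs = mset ys"
  by (metis multiset_eq_iff order_prod_lfac)

lemma prod_lfac_perm: "mset xs = mset ys \<Longrightarrow> prod_list (map lfac xs) = prod_list (map lfac ys)"
  by (metis mset_map prod_mset_prod_list)

lemma sorted_desc_unique:
  assumes "sorted_wrt (\<ge>) xs" "sorted_wrt (\<ge>) ys" "mset xs = mset ys"
  shows "xs = (ys :: real list)"
proof -
  have a: "sorted (rev xs)" "sorted (rev ys)" using assms by (simp_all add: sorted_wrt_rev)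
  have "mset (rev xs) = mset (rev ys)" using assms by simp
  then have "rev xs = rev ys" using properties_for_sort[OF _ a(1)] properties_for_sort[of "rev ys" "rev ys"] a(2)
    by metis
  then show ?thesis by simp
qed

lemma eigs_desc_eq:
  assumes "length ls = dim_row M" "sorted_wrt (\<ge>) ls" "char_poly M = prod_list (map lfac ls)"
  shows "eigs_desc M = ls"
  unfolding eigs_desc_def
proof (rule the_equality)
  show "length ls = dim_row M \<and> sorted_wrt (\<ge>) ls \<and> char_poly M = prod_list (map lfac ls)"
    using assms by auto
  fix ls' assume h: "length ls' = dim_row M \<and> sorted_wrt (\<ge>) ls' \<and> char_poly M = prod_list (map lfac ls')"
  then have "mset ls' = mset ls" using assms(3) prod_lfac_mset by metis
  then show "ls' = ls" using sorted_desc_unique h assms(2) by blast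
qed

lemma char_poly_dmat: "char_poly (dmat n t) = prod_list (map lfac (map t [0..<n]))"
proof -
  have ut: "upper_triangular (dmat n t)" by (auto simp: upper_triangular_def dmat_def)
  have "diag_mat (dmat n t) = map (\<lambda>i. complex_of_real (t i)) [0..<n]"
    by (auto simp: diag_mat_def dmat_def intro!: nth_equalityI)
  then show ?thesis using char_poly_upper_triangular[OF dmat_carrier ut] by (simp add: o_def)
qed

lemma char_poly_unitary_conj:
  assumes "unitary n U" "X \<in> carrier_mat n n"
  shows "char_poly (U * X * cadj U) = char_poly X"
proof -
  have U: "U \<in> carrier_mat n n" "cadj U * U = 1\<^sub>m n" "U * cadj U = 1\<^sub>m n" using assms unfolding unitary_def by auto
  have "similar_mat_wit (U * X * cadj U) X U (cadj U)"
    unfolding similar_mat_wit_def Let_def using U assms(2) by auto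
  then show ?thesis using char_poly_similar unfolding similar_mat_def by blast
qed

lemma eigs_desc_unitary:
  assumes "unitary n U" "length ls = n" "sorted_wrt (\<ge>) ls"
  shows "eigs_desc (U * dmat n (\<lambda>l. ls ! l) * cadj U) = ls"
proof -
  have U: "U \<in> carrier_mat n n" using assms unfolding unitary_def by auto
  have "map (\<lambda>l. ls ! l) [0..<n] = ls" using assms(2) by (intro nth_equalityI) auto
  then show ?thesis
    using assms U by (intro eigs_desc_eq) (auto simp: char_poly_unitary_conj char_poly_dmat)
qed

lemma spectral_sorted:
  assumes H: "H \<in> carrier_mat n n" and h: "cadj H = H"
  shows "\<exists>U. unitary n U \<and> H = U * dmat n (\<lambda>l. eigs_desc H ! l) * cadj U \<and>
     length (eigs_desc H) = n \<and> sorted_wrt (\<ge>) (eigs_desc H)"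
proof -
  obtain U0 t where uU0: "unitary n U0" and Heq: "H = U0 * dmat n t * cadj U0"
    using spectral[OF H h] by blast
  have U0: "U0 \<in> carrier_mat n n" using uU0 unfolding unitary_def by auto
  define ds where "ds = map t [0..<n]"
  define L where "L = rev (sort ds)"
  have sL: "sorted_wrt (\<ge>) L" unfolding L_def by (simp add: sorted_wrt_rev)
  have mL: "mset L = mset ds" unfolding L_def by simp
  have lL: "length L = n" unfolding L_def ds_def by simp
  have "char_poly H = prod_list (map lfac ds)"
    unfolding Heq ds_def using char_poly_unitary_conj[OF uU0 dmat_carrier] char_poly_dmat by simp
  also have "\<dots> = prod_list (map lfac L)" using prod_lfac_perm[OF mL[symmetric]] .
  finally have "eigs_desc H = L" using H lL sL by (intro eigs_desc_eq) auto
  moreover obtain \<sigma> where bij: "bij_betw \<sigma> {..<length L} {..<length ds}"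
      and Ls: "\<forall>i<length L. L ! i = ds ! (\<sigma> i)"
    using permutation_Ex_bij[OF mL] by blast
  have bij': "bij_betw \<sigma> {..<n} {..<n}" using bij lL by (simp add: ds_def)
  have sig: "\<sigma> i < n" if "i < n" for i using bij' that by (auto dest: bij_betw_apply)
  have Lt: "L ! i = t (\<sigma> i)" if "i < n" for i using Ls lL sig[OF that] that by (simp add: ds_def)
  define U where "U = mat n n (\<lambda>(i,j). U0 $$ (i, \<sigma> j))"
  have U: "U \<in> carrier_mat n n" by (simp add: U_def)
  have UU: "cadj U * U = 1\<^sub>m n"
  proof (rule eq_matI)
    fix a b assume "a < dim_row (1\<^sub>m n)" "b < dim_col (1\<^sub>m n)"
    then have ab: "a < n" "b < n" by auto
    have "(cadj U * U) $$ (a,b) = (\<Sum>l<n. cnj (U0 $$ (l,\<sigma> a)) * U0 $$ (l,\<sigma> b))"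
      using U ab by (subst mult_idx[of _ n n _ n]) (auto simp: U_def intro!: sum.cong)
    also have "\<dots> = (if \<sigma> a = \<sigma> b then 1 else 0)" using unitary_cols[OF uU0 sig sig] ab by simp
    also have "\<dots> = 1\<^sub>m n $$ (a,b)" using ab bij_betw_imp_inj_on[OF bij'] by (auto dest: inj_onD)
    finally show "(cadj U * U) $$ (a,b) = 1\<^sub>m n $$ (a,b)" .
  qed (use U in auto)
  have UU2: "U * cadj U = 1\<^sub>m n" using mat_mult_left_right_inverse[OF cadj_carrier[OF U] U UU] .
  have uU: "unitary n U" unfolding unitary_def using U UU UU2 by auto
  have "H = U * dmat n (\<lambda>l. L ! l) * cadj U"
  proof (rule eq_matI)
    fix i j assume "i < dim_row (U * dmat n (\<lambda>l. L ! l) * cadj U)" "j < dim_col (U * dmat n (\<lambda>l. L ! l) * cadj U)"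
    then have ij: "i < n" "j < n" using U by auto
    have "(U * dmat n (\<lambda>l. L ! l) * cadj U) $$ (i,j) = (\<Sum>l<n. U $$ (i,l) * of_real (L ! l) * cnj (U $$ (j,l)))"
      by (rule udu_idx[OF U ij])
    also have "\<dots> = (\<Sum>l<n. U0 $$ (i,\<sigma> l) * of_real (t (\<sigma> l)) * cnj (U0 $$ (j,\<sigma> l)))"
      using ij Lt by (auto simp: U_def intro!: sum.cong)
    also have "\<dots> = (\<Sum>l<n. U0 $$ (i,l) * of_real (t l) * cnj (U0 $$ (j,l)))"
      using sum.reindex_bij_betw[OF bij', of "\<lambda>l. U0 $$ (i,l) * of_real (t l) * cnj (U0 $$ (j,l))"] by simp
    also have "\<dots> = H $$ (i,j)" unfolding Heq using udu_idx[OF U0 ij] by simp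
    finally show "H $$ (i,j) = (U * dmat n (\<lambda>l. L ! l) * cadj U) $$ (i,j)" by simp
  qed (use H U in auto)
  ultimately show ?thesis using uU lL sL by auto
qed

lemma cnj_mult_self': "cnj z * z = complex_of_real ((cmod z)\<^sup>2)"
  using cnj_mult_self[of z] by (simp add: mult.commute)

lemma sum_add_split: "(\<Sum>a<A + (B::nat). f a) = (\<Sum>a<A. f a) + (\<Sum>q<B. f (A + q))"
  by (induct B) (auto simp: add.assoc)

lemma sum_nm: "(\<Sum>a<(n::nat) * m. f a) = (\<Sum>i<n. \<Sum>q<m. f (i * m + q))"
proof (induct n)
  case (Suc n)
  have "(\<Sum>a<Suc n * m. f a) = (\<Sum>a<n * m + m. f a)" by (simp add: add.commute)
  also have "\<dots> = (\<Sum>a<n*m. f a) + (\<Sum>q<m. f (n * m + q))" by (rule sum_add_split)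
  finally show ?case using Suc by simp
qed simp

lemma det_zero_row:
  assumes A: "A \<in> carrier_mat N N" and k: "k < N" and z: "\<forall>j<N. A $$ (k,j) = 0"
  shows "det A = 0"
proof -
  have "multrow k 0 A = A" using A z by (intro eq_matI) (auto simp: mat_multrow_gen_def)
  then show ?thesis using det_multrow[OF k A, of 0] by simp
qed

lemma mult_carrier_gen: "A \<in> carrier_mat a b \<Longrightarrow> B \<in> carrier_mat b c \<Longrightarrow> A * B \<in> carrier_mat a c"
  by (rule mult_carrier_mat)

lemma schmidt_decomp:
  assumes M: "M \<in> carrier_mat n m"
  defines "L \<equiv> eigs_desc (M * cadj M)"
  shows "\<exists>U. unitary n U \<and> length L = n \<and> sorted_wrt (\<ge>) L \<and> (\<forall>l<n. L ! l \<ge> 0) \<and>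
     (\<forall>l. m \<le> l \<and> l < n \<longrightarrow> L ! l = 0) \<and>
     (\<forall>l<n. \<forall>l'<n. (\<Sum>q<m. (cadj U * M) $$ (l,q) * cnj ((cadj U * M) $$ (l',q))) =
          (if l = l' then complex_of_real (L ! l) else 0)) \<and>
     M = U * (cadj U * M) \<and>
     (\<Sum>l<n. L ! l) = (\<Sum>i<n. \<Sum>q<m. (cmod (M $$ (i,q)))\<^sup>2)"
proof -
  define H where "H = M * cadj M"
  have H: "H \<in> carrier_mat n n" using M by (simp add: H_def mult_carrier_gen)
  have hH: "cadj H = H" unfolding H_def using cadj_mult[OF M cadj_carrier[OF M]] by simp
  obtain U where uU: "unitary n U" and Heq: "H = U * dmat n (\<lambda>l. L ! l) * cadj U"
      and lL: "length L = n" and sL: "sorted_wrt (\<ge>) L"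
    using spectral_sorted[OF H hH] unfolding L_def H_def by blast
  have U: "U \<in> carrier_mat n n" "cadj U * U = 1\<^sub>m n" "U * cadj U = 1\<^sub>m n" using uU unfolding unitary_def by auto
  define D where "D = dmat n (\<lambda>l. L ! l)"
  have D: "D \<in> carrier_mat n n" by (simp add: D_def)
  define N where "N = cadj U * M"
  have N: "N \<in> carrier_mat n m" unfolding N_def by (rule mult_carrier_gen[OF cadj_carrier[OF U(1)] M])
  have cN: "cadj N = cadj M * U" unfolding N_def using cadj_mult[OF cadj_carrier[OF U(1)] M] by simp
  have cU: "cadj U \<in> carrier_mat n n" using U by simp
  have cM: "cadj M \<in> carrier_mat m n" using M by simp
  have "N * cadj N = cadj U * (M * cadj M) * U"
    unfolding cN unfolding N_def using assoc_mult_mat[OF cU M mult_carrier_gen[OF cM U(1)]]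
      assoc_mult_mat[OF M cM U(1)] assoc_mult_mat[OF cU mult_carrier_gen[OF M cM] U(1)] by simp
  also have "\<dots> = (cadj U * U) * D * (cadj U * U)"
    unfolding H_def[symmetric] Heq D_def[symmetric] using U(1) D cU by (simp add: assoc_mult_mat[of _ n n _ n _ n])
  also have "\<dots> = D" unfolding U(2) using D by simp
  finally have NN: "N * cadj N = D" .
  have Nent: "(\<Sum>q<m. N $$ (l,q) * cnj (N $$ (l',q))) = (if l = l' then complex_of_real (L ! l) else 0)"
    if "l < n" "l' < n" for l l'
  proof -
    have "(N * cadj N) $$ (l,l') = (\<Sum>q<m. N $$ (l,q) * cnj (N $$ (l',q)))"
      using N that by (subst mult_idx[of _ n m _ n]) auto
    then show ?thesis using NN that by (auto simp: D_def dmat_def)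
  qed
  have Lsq: "L ! l = (\<Sum>q<m. (cmod (N $$ (l,q)))\<^sup>2)" if "l < n" for l
  proof -
    have "complex_of_real (L ! l) = (\<Sum>q<m. complex_of_real ((cmod (N $$ (l,q)))\<^sup>2))"
      using Nent[OF that that] by (simp add: cnj_mult_self)
    then show ?thesis by (metis of_real_eq_iff of_real_sum)
  qed
  have Lnn: "\<forall>l<n. L ! l \<ge> 0" using Lsq by (auto intro: sum_nonneg)
  have rank: "L ! l = 0" if "m \<le> l" "l < n" for l
  proof (rule ccontr)
    assume "L ! l \<noteq> 0"
    then have Llpos: "L ! l > 0" using Lnn that by force
    have Lpos: "L ! i > 0" if "i \<le> m" for i
    proof -
      have "L ! i \<ge> L ! l" using sL that \<open>m \<le> l\<close> \<open>l < n\<close> lL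
        by (cases "i = l") (auto simp: sorted_wrt_iff_nth_less)
      then show ?thesis using Llpos by simp
    qed
    define R where "R = mat (Suc m) (Suc m) (\<lambda>(i,j). if j < m then N $$ (i,j) else 0)"
    have R: "R \<in> carrier_mat (Suc m) (Suc m)" by (simp add: R_def)
    have RR: "R * cadj R = dmat (Suc m) (\<lambda>i. L ! i)"
    proof (rule eq_matI)
      fix i j assume "i < dim_row (dmat (Suc m) (\<lambda>i. L ! i))" "j < dim_col (dmat (Suc m) (\<lambda>i. L ! i))"
      then have ij: "i < Suc m" "j < Suc m" by (auto simp: dmat_def)
      have ijn: "i < n" "j < n" using ij that by auto
      have "(R * cadj R) $$ (i,j) = (\<Sum>q<Suc m. R $$ (i,q) * cnj (R $$ (j,q)))"
        using R ij by (subst mult_idx[of _ "Suc m" "Suc m" _ "Suc m"]) auto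
      also have "\<dots> = (\<Sum>q<m. N $$ (i,q) * cnj (N $$ (j,q)))"
        using ij by (simp add: R_def)
      also have "\<dots> = dmat (Suc m) (\<lambda>i. L ! i) $$ (i,j)" using Nent[OF ijn] ij by (simp add: dmat_def)
      finally show "(R * cadj R) $$ (i,j) = dmat (Suc m) (\<lambda>i. L ! i) $$ (i,j)" .
    qed (use R in \<open>auto simp: dmat_def\<close>)
    have "det (cadj R) = 0"
      by (rule det_zero_row[of _ "Suc m" m]) (use R in \<open>auto simp: R_def\<close>)
    then have "det (R * cadj R) = 0" using det_mult[OF R cadj_carrier[OF R]] by simp
    moreover have "det (dmat (Suc m) (\<lambda>i. L ! i)) \<noteq> 0"
    proof -
      have ut: "upper_triangular (dmat (Suc m) (\<lambda>i. L ! i))" by (auto simp: upper_triangular_def dmat_def)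
      have "det (dmat (Suc m) (\<lambda>i. L ! i)) = prod_list (diag_mat (dmat (Suc m) (\<lambda>i. L ! i)))"
        by (rule det_upper_triangular[OF ut dmat_carrier])
      also have "diag_mat (dmat (Suc m) (\<lambda>i. L ! i)) = map (\<lambda>i. complex_of_real (L ! i)) [0..<Suc m]"
        by (auto simp: diag_mat_def dmat_def intro!: nth_equalityI)
      moreover have "\<forall>i<Suc m. L ! i \<noteq> 0" using Lpos by (metis less_Suc_eq_le less_irrefl)
      then have "0 \<notin> set (map (\<lambda>i. complex_of_real (L ! i)) [0..<Suc m])" by auto
      ultimately show ?thesis unfolding prod_list_zero_iff by simp
    qed
    ultimately show False using RR by simp
  qed
  have MUN: "M = U * N"
    unfolding N_def using assoc_mult_mat[OF U(1) cU M, symmetric] U M by simp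
  have trace: "(\<Sum>l<n. L ! l) = (\<Sum>i<n. \<Sum>q<m. (cmod (M $$ (i,q)))\<^sup>2)"
  proof -
    have "cadj N * N = cadj M * (U * (cadj U * M))"
      unfolding cN unfolding N_def by (rule assoc_mult_mat[OF cM U(1) mult_carrier_gen[OF cU M]])
    also have "U * (cadj U * M) = M" using MUN unfolding N_def by simp
    finally have NN2: "cadj N * N = cadj M * M" .
    have col: "(\<Sum>l<n. (cmod (N $$ (l,q)))\<^sup>2) = (\<Sum>i<n. (cmod (M $$ (i,q)))\<^sup>2)" if q: "q < m" for q
    proof -
      have "(cadj N * N) $$ (q,q) = (\<Sum>l<n. cnj (N $$ (l,q)) * N $$ (l,q))"
        using N q by (subst mult_idx[of _ m n _ m]) auto
      moreover have "(cadj M * M) $$ (q,q) = (\<Sum>l<n. cnj (M $$ (l,q)) * M $$ (l,q))"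
        using M q by (subst mult_idx[of _ m n _ m]) auto
      ultimately have "(\<Sum>l<n. complex_of_real ((cmod (N $$ (l,q)))\<^sup>2)) = (\<Sum>l<n. complex_of_real ((cmod (M $$ (l,q)))\<^sup>2))"
        using NN2 by (simp add: cnj_mult_self')
      then show ?thesis unfolding of_real_sum[symmetric] of_real_eq_iff .
    qed
    have "(\<Sum>l<n. L ! l) = (\<Sum>l<n. \<Sum>q<m. (cmod (N $$ (l,q)))\<^sup>2)" using Lsq by simp
    also have "\<dots> = (\<Sum>q<m. \<Sum>l<n. (cmod (N $$ (l,q)))\<^sup>2)" by (rule sum.swap)
    also have "\<dots> = (\<Sum>q<m. \<Sum>i<n. (cmod (M $$ (i,q)))\<^sup>2)" using col by simp
    also have "\<dots> = (\<Sum>i<n. \<Sum>q<m. (cmod (M $$ (i,q)))\<^sup>2)" by (rule sum.swap)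
    finally show ?thesis .
  qed
  show ?thesis using uU lL sL Lnn rank Nent MUN trace unfolding N_def by blast
qed

lemma cs_real:
  fixes a b :: "'i \<Rightarrow> real"
  assumes "finite A"
  shows "(\<Sum>i\<in>A. a i * b i)\<^sup>2 \<le> (\<Sum>i\<in>A. (a i)\<^sup>2) * (\<Sum>i\<in>A. (b i)\<^sup>2)"
proof -
  have "0 \<le> (\<Sum>i\<in>A. \<Sum>j\<in>A. (a i * b j - a j * b i)\<^sup>2)" by (intro sum_nonneg) auto
  also have "\<dots> = (\<Sum>i\<in>A. \<Sum>j\<in>A. (a i)\<^sup>2 * (b j)\<^sup>2 + (a j)\<^sup>2 * (b i)\<^sup>2 - 2 * ((a i * b i) * (a j * b j)))"
    by (intro sum.cong refl) (simp add: power2_eq_square algebra_simps)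
  also have "\<dots> = (\<Sum>i\<in>A. \<Sum>j\<in>A. (a i)\<^sup>2 * (b j)\<^sup>2) + (\<Sum>i\<in>A. \<Sum>j\<in>A. (a j)\<^sup>2 * (b i)\<^sup>2)
      - 2 * (\<Sum>i\<in>A. \<Sum>j\<in>A. (a i * b i) * (a j * b j))"
    by (simp add: sum.distrib sum_subtractf sum_distrib_left)
  also have "(\<Sum>i\<in>A. \<Sum>j\<in>A. (a i)\<^sup>2 * (b j)\<^sup>2) = (\<Sum>i\<in>A. (a i)\<^sup>2) * (\<Sum>i\<in>A. (b i)\<^sup>2)"
    by (simp add: sum_product)
  also have "(\<Sum>i\<in>A. \<Sum>j\<in>A. (a j)\<^sup>2 * (b i)\<^sup>2) = (\<Sum>i\<in>A. (a i)\<^sup>2) * (\<Sum>i\<in>A. (b i)\<^sup>2)"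
  proof -
    have "(\<Sum>i\<in>A. \<Sum>j\<in>A. (a j)\<^sup>2 * (b i)\<^sup>2) = (\<Sum>i\<in>A. \<Sum>j\<in>A. (b i)\<^sup>2 * (a j)\<^sup>2)"
      by (simp add: mult.commute)
    also have "\<dots> = (\<Sum>i\<in>A. (b i)\<^sup>2) * (\<Sum>i\<in>A. (a i)\<^sup>2)" by (simp add: sum_product)
    finally show ?thesis by simp
  qed
  also have "(\<Sum>i\<in>A. \<Sum>j\<in>A. (a i * b i) * (a j * b j)) = (\<Sum>i\<in>A. a i * b i)\<^sup>2"
    by (simp add: sum_product power2_eq_square)
  finally show ?thesis by simp
qed

lemma cs_complex:
  fixes u v :: "'i \<Rightarrow> complex"
  assumes "finite A"
  shows "cmod (\<Sum>i\<in>A. u i * v i) \<le> sqrt (\<Sum>i\<in>A. (cmod (u i))\<^sup>2) * sqrt (\<Sum>i\<in>A. (cmod (v i))\<^sup>2)"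
proof -
  have "cmod (\<Sum>i\<in>A. u i * v i) \<le> (\<Sum>i\<in>A. cmod (u i) * cmod (v i))"
    using norm_sum[of "\<lambda>i. u i * v i" A] by (simp add: norm_mult)
  also have "\<dots> \<le> sqrt ((\<Sum>i\<in>A. (cmod (u i))\<^sup>2) * (\<Sum>i\<in>A. (cmod (v i))\<^sup>2))"
    using cs_real[OF assms, of "\<lambda>i. cmod (u i)" "\<lambda>i. cmod (v i)"] by (simp add: real_le_rsqrt)
  finally show ?thesis by (simp add: real_sqrt_mult)
qed

lemma sum_sq_bound:
  fixes x :: "nat \<Rightarrow> real"
  shows "(\<Sum>l<k. x l)\<^sup>2 \<le> real k * (\<Sum>l<k. (x l)\<^sup>2)"
  using cs_real[of "{..<k}" "\<lambda>_. 1" x] by simp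

lemma key_ineq:
  fixes x :: "nat \<Rightarrow> real" and k :: nat and \<theta> :: real
  assumes k: "1 \<le> k" and th: "0 < \<theta>" "\<theta> < 1"
    and nn: "\<And>l. l \<le> k \<Longrightarrow> x l \<ge> 0"
    and s1: "(\<Sum>l<Suc k. (x l)\<^sup>2) = 1"
    and adm: "x k \<le> \<theta> / real k * (\<Sum>l<k. x l)"
  shows "(\<Sum>l<Suc k. x l)\<^sup>2 \<le> (real k + \<theta>)\<^sup>2 / (real k + \<theta>\<^sup>2)"
proof -
  define a where "a = (\<Sum>l<k. x l)"
  define b where "b = x k"
  define Q where "Q = (\<Sum>l<k. (x l)\<^sup>2)"
  define K where "K = real k"
  have K: "K \<ge> 1" using k by (simp add: K_def)
  have a0: "a \<ge> 0" unfolding a_def using nn by (auto intro: sum_nonneg)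
  have b0: "b \<ge> 0" unfolding b_def using nn by auto
  have Qb: "Q + b\<^sup>2 = 1" using s1 by (simp add: Q_def b_def)
  have aQ: "a\<^sup>2 \<le> K * Q" unfolding a_def Q_def K_def by (rule sum_sq_bound)
  have bth: "K * b \<le> \<theta> * a" using adm K unfolding a_def b_def K_def by (simp add: field_simps)
  define A where "A = K\<^sup>2 * (K + 2 * \<theta> - 1)"
  have A0: "A \<ge> 0" unfolding A_def using K th by auto
  have iden: "K\<^sup>2 * ((K + \<theta>)\<^sup>2 * (a\<^sup>2 + K * b\<^sup>2) - K * (K + \<theta>\<^sup>2) * (a + b)\<^sup>2) =
      A * (K * b - \<theta> * a)\<^sup>2 + 2 * K\<^sup>2 * a * (1 - \<theta>) * (K + \<theta>) * (\<theta> * a - K * b)"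
    unfolding A_def by (simp add: power2_eq_square algebra_simps)
  have "0 \<le> A * (K * b - \<theta> * a)\<^sup>2 + 2 * K\<^sup>2 * a * (1 - \<theta>) * (K + \<theta>) * (\<theta> * a - K * b)"
    using A0 a0 th K bth by (intro add_nonneg_nonneg mult_nonneg_nonneg) auto
  then have "0 \<le> K\<^sup>2 * ((K + \<theta>)\<^sup>2 * (a\<^sup>2 + K * b\<^sup>2) - K * (K + \<theta>\<^sup>2) * (a + b)\<^sup>2)"
    using iden by simp
  then have "0 \<le> (K + \<theta>)\<^sup>2 * (a\<^sup>2 + K * b\<^sup>2) - K * (K + \<theta>\<^sup>2) * (a + b)\<^sup>2"
    using K by (simp add: zero_le_mult_iff)
  then have D: "K * (K + \<theta>\<^sup>2) * (a + b)\<^sup>2 \<le> (K + \<theta>)\<^sup>2 * (a\<^sup>2 + K * b\<^sup>2)" by simp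
  have "K * Q + K * b\<^sup>2 = K" using Qb by (metis distrib_left mult.right_neutral)
  then have "a\<^sup>2 + K * b\<^sup>2 \<le> K" using aQ by linarith
  then have "(K + \<theta>)\<^sup>2 * (a\<^sup>2 + K * b\<^sup>2) \<le> (K + \<theta>)\<^sup>2 * K" by (intro mult_left_mono) auto
  note E = this
  have "K * ((K + \<theta>\<^sup>2) * (a + b)\<^sup>2) = K * (K + \<theta>\<^sup>2) * (a + b)\<^sup>2" by (simp only: mult.assoc)
  also have "\<dots> \<le> (K + \<theta>)\<^sup>2 * (a\<^sup>2 + K * b\<^sup>2)" by (rule D)
  also have "\<dots> \<le> (K + \<theta>)\<^sup>2 * K" by (rule E)
  also have "\<dots> = K * (K + \<theta>)\<^sup>2" by (simp only: mult.commute)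
  finally have "K * ((K + \<theta>\<^sup>2) * (a + b)\<^sup>2) \<le> K * (K + \<theta>)\<^sup>2" .
  then have F: "(K + \<theta>\<^sup>2) * (a + b)\<^sup>2 \<le> (K + \<theta>)\<^sup>2" using K by simp
  have pos: "K + \<theta>\<^sup>2 > 0" using K by (simp add: add_pos_nonneg)
  have "(a + b)\<^sup>2 \<le> (K + \<theta>)\<^sup>2 / (K + \<theta>\<^sup>2)"
    unfolding pos_le_divide_eq[OF pos] using F by (simp only: mult.commute)
  then have G: "(a + b)\<^sup>2 \<le> (real k + \<theta>)\<^sup>2 / (real k + \<theta>\<^sup>2)" unfolding K_def .
  have S: "(\<Sum>l<Suc k. x l) = a + b" unfolding a_def b_def by (rule sum.lessThan_Suc)
  show ?thesis unfolding S by (rule G)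
qed

lemma const_ineq:
  fixes k :: nat and \<theta> :: real
  assumes k: "1 \<le> k" and th: "0 < \<theta>" "\<theta> < 1"
  shows "(real k + \<theta>\<^sup>2) / (real k + \<theta>)\<^sup>2 * (real k + 1) > 1"
proof -
  define K where "K = real k"
  have K: "K \<ge> 1" using k by (simp add: K_def)
  have pos: "(K + \<theta>)\<^sup>2 > 0" using K th by simp
  have e: "(K + \<theta>\<^sup>2) * (K + 1) - (K + \<theta>)\<^sup>2 = K * (1 - \<theta>)\<^sup>2"
    by (simp add: power2_eq_square algebra_simps)
  have "K * (1 - \<theta>)\<^sup>2 > 0" using K th by (intro mult_pos_pos) auto
  then have lt: "(K + \<theta>)\<^sup>2 < (K + \<theta>\<^sup>2) * (K + 1)" using e by linarith
  have "1 < (K + \<theta>\<^sup>2) * (K + 1) / (K + \<theta>)\<^sup>2"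
    using lt pos by (subst less_divide_eq_1_pos) auto
  then have "(K + \<theta>\<^sup>2) / (K + \<theta>)\<^sup>2 * (K + 1) > 1" by (simp only: times_divide_eq_left)
  then show ?thesis unfolding K_def .
qed

lemma sum4_swap:
  "(\<Sum>p\<in>P. \<Sum>q\<in>Q. \<Sum>p'\<in>P'. \<Sum>q'\<in>Q'. F p q p' q') = (\<Sum>p'\<in>P'. \<Sum>q'\<in>Q'. \<Sum>p\<in>P. \<Sum>q\<in>Q. F p q p' q')"
proof -
  have "(\<Sum>p\<in>P. \<Sum>q\<in>Q. \<Sum>p'\<in>P'. \<Sum>q'\<in>Q'. F p q p' q') = (\<Sum>p\<in>P. \<Sum>p'\<in>P'. \<Sum>q\<in>Q. \<Sum>q'\<in>Q'. F p q p' q')"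
    by (rule sum.cong[OF refl], rule sum.swap)
  also have "\<dots> = (\<Sum>p'\<in>P'. \<Sum>p\<in>P. \<Sum>q\<in>Q. \<Sum>q'\<in>Q'. F p q p' q')" by (rule sum.swap)
  also have "\<dots> = (\<Sum>p'\<in>P'. \<Sum>p\<in>P. \<Sum>q'\<in>Q'. \<Sum>q\<in>Q. F p q p' q')" by (intro sum.cong refl sum.swap)
  also have "\<dots> = (\<Sum>p'\<in>P'. \<Sum>q'\<in>Q'. \<Sum>p\<in>P. \<Sum>q\<in>Q. F p q p' q')" by (rule sum.cong[OF refl], rule sum.swap)
  finally show ?thesis .
qed

lemma Ad_idx:
  assumes A: "A \<in> carrier_mat m m" and Y: "Y \<in> carrier_mat m m" and pq: "p < m" "q < m"
  shows "(A * Y * cadj A) $$ (p,q) = (\<Sum>p'<m. \<Sum>q'<m. A $$ (p,p') * Y $$ (p',q') * cnj (A $$ (q,q')))"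
proof -
  have AY: "A * Y \<in> carrier_mat m m" using A Y by simp
  have "(A * Y * cadj A) $$ (p,q) = (\<Sum>q'<m. (A * Y) $$ (p,q') * cadj A $$ (q',q))"
    by (rule mult_idx[OF AY cadj_carrier[OF A] pq])
  also have "\<dots> = (\<Sum>q'<m. (\<Sum>p'<m. A $$ (p,p') * Y $$ (p',q')) * cnj (A $$ (q,q')))"
    using A pq by (intro sum.cong refl) (subst mult_idx[OF A Y pq(1)], auto)
  also have "\<dots> = (\<Sum>q'<m. \<Sum>p'<m. A $$ (p,p') * Y $$ (p',q') * cnj (A $$ (q,q')))"
    by (simp add: sum_distrib_right)
  also have "\<dots> = (\<Sum>p'<m. \<Sum>q'<m. A $$ (p,p') * Y $$ (p',q') * cnj (A $$ (q,q')))" by (rule sum.swap)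
  finally show ?thesis .
qed

definition blk :: "nat \<Rightarrow> complex mat \<Rightarrow> nat \<Rightarrow> complex mat \<Rightarrow> complex mat" where
  "blk m A K X = mat (K*m) (K*m) (\<lambda>(a,b). (A * mblock m X (a div m) (b div m) * cadj A) $$ (a mod m, b mod m))"

definition tvec :: "nat \<Rightarrow> complex mat \<Rightarrow> nat \<Rightarrow> complex vec \<Rightarrow> complex vec" where
  "tvec m A K v = vec (K*m) (\<lambda>a. \<Sum>q<m. cnj (A $$ (q, a mod m)) * v $ ((a div m) * m + q))"

lemma qform_nm:
  assumes "v \<in> carrier_vec (K*m)"
  shows "qform X v = (\<Sum>i<K. \<Sum>p<m. \<Sum>j<K. \<Sum>q<m. cnj (v $ (i*m+p)) * X $$ (i*m+p, j*m+q) * v $ (j*m+q))"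
  using assms unfolding qform_def by (simp add: sum_nm)

lemma divmod_im: "p < m \<Longrightarrow> (i * m + p) div m = i" "p < m \<Longrightarrow> (i * m + p) mod m = (p::nat)"
  by auto

lemma im_less: "i < K \<Longrightarrow> p < m \<Longrightarrow> i * m + p < K * (m::nat)"
proof -
  assume "i < K" "p < m"
  then have "i * m + p < i * m + m" by simp
  also have "\<dots> = Suc i * m" by simp
  also have "\<dots> \<le> K * m" using \<open>i < K\<close> by (intro mult_right_mono) auto
  finally show ?thesis .
qed

lemma swap_core:
  fixes c e :: "nat \<Rightarrow> complex" and a d x :: "nat \<Rightarrow> nat \<Rightarrow> complex"
  shows "(\<Sum>p<m. \<Sum>q<m. c p * (\<Sum>p'<m. \<Sum>q'<m. a p p' * x p' q' * d q q') * e q) =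
         (\<Sum>p'<m. \<Sum>q'<m. (\<Sum>p<m. a p p' * c p) * x p' q' * (\<Sum>q<m. d q q' * e q))"
proof -
  have "(\<Sum>p<m. \<Sum>q<m. c p * (\<Sum>p'<m. \<Sum>q'<m. a p p' * x p' q' * d q q') * e q) =
        (\<Sum>p<m. \<Sum>q<m. \<Sum>p'<m. \<Sum>q'<m. c p * a p p' * x p' q' * d q q' * e q)"
    by (simp add: sum_distrib_left sum_distrib_right mult.assoc)
  also have "\<dots> = (\<Sum>p'<m. \<Sum>q'<m. \<Sum>p<m. \<Sum>q<m. c p * a p p' * x p' q' * d q q' * e q)"
    by (rule sum4_swap)
  also have "\<dots> = (\<Sum>p'<m. \<Sum>q'<m. (\<Sum>p<m. a p p' * c p) * x p' q' * (\<Sum>q<m. d q q' * e q))"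
    by (simp add: sum_distrib_left sum_distrib_right mult_ac)
  finally show ?thesis .
qed

lemma qform_blk:
  assumes A: "A \<in> carrier_mat m m" and X: "X \<in> carrier_mat (K*m) (K*m)" and v: "v \<in> carrier_vec (K*m)"
  shows "qform (blk m A K X) v = qform X (tvec m A K v)"
proof -
  have w: "tvec m A K v \<in> carrier_vec (K*m)" by (simp add: tvec_def)
  have wi: "tvec m A K v $ (i*m+p) = (\<Sum>q<m. cnj (A $$ (q, p)) * v $ (i * m + q))" if "i < K" "p < m" for i p
    using that im_less[OF that] by (simp add: tvec_def divmod_im)
  have bi: "blk m A K X $$ (i*m+p, j*m+q) =
      (\<Sum>p'<m. \<Sum>q'<m. A $$ (p,p') * X $$ (i*m+p', j*m+q') * cnj (A $$ (q,q')))"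
    if "i < K" "p < m" "j < K" "q < m" for i p j q
  proof -
    have mb: "mblock m X i j \<in> carrier_mat m m" by (simp add: mblock_def)
    have "blk m A K X $$ (i*m+p, j*m+q) = (A * mblock m X i j * cadj A) $$ (p, q)"
      using that im_less by (simp add: blk_def divmod_im)
    also have "\<dots> = (\<Sum>p'<m. \<Sum>q'<m. A $$ (p,p') * mblock m X i j $$ (p',q') * cnj (A $$ (q,q')))"
      by (rule Ad_idx[OF A mb that(2) that(4)])
    finally show ?thesis by (simp add: mblock_def)
  qed
  have "qform (blk m A K X) v = (\<Sum>i<K. \<Sum>p<m. \<Sum>j<K. \<Sum>q<m.
        cnj (v $ (i*m+p)) * blk m A K X $$ (i*m+p, j*m+q) * v $ (j*m+q))"
    by (rule qform_nm[OF v])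
  also have "\<dots> = (\<Sum>i<K. \<Sum>j<K. \<Sum>p<m. \<Sum>q<m.
        cnj (v $ (i*m+p)) * blk m A K X $$ (i*m+p, j*m+q) * v $ (j*m+q))"
    by (rule sum.cong[OF refl], rule sum.swap)
  also have "\<dots> = (\<Sum>i<K. \<Sum>j<K. \<Sum>p'<m. \<Sum>q'<m.
        cnj (tvec m A K v $ (i*m+p')) * X $$ (i*m+p', j*m+q') * tvec m A K v $ (j*m+q'))"
  proof (rule sum.cong[OF refl], rule sum.cong[OF refl])
    fix i j assume ij: "i \<in> {..<K}" "j \<in> {..<K}"
    have "(\<Sum>p<m. \<Sum>q<m. cnj (v $ (i*m+p)) * blk m A K X $$ (i*m+p, j*m+q) * v $ (j*m+q)) =
        (\<Sum>p<m. \<Sum>q<m. cnj (v $ (i*m+p)) * (\<Sum>p'<m. \<Sum>q'<m. A $$ (p,p') * X $$ (i*m+p', j*m+q') * cnj (A $$ (q,q'))) * v $ (j*m+q))"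
      using ij bi by (intro sum.cong refl) auto
    also have "\<dots> = (\<Sum>p'<m. \<Sum>q'<m. (\<Sum>p<m. A $$ (p,p') * cnj (v $ (i*m+p))) * X $$ (i*m+p', j*m+q') * (\<Sum>q<m. cnj (A $$ (q,q')) * v $ (j*m+q)))"
      by (rule swap_core)
    also have "\<dots> = (\<Sum>p'<m. \<Sum>q'<m. cnj (tvec m A K v $ (i*m+p')) * X $$ (i*m+p', j*m+q') * tvec m A K v $ (j*m+q'))"
      using ij by (intro sum.cong refl) (auto simp: wi cnj_sum)
    finally show "(\<Sum>p<m. \<Sum>q<m. cnj (v $ (i*m+p)) * blk m A K X $$ (i*m+p, j*m+q) * v $ (j*m+q)) =
        (\<Sum>p'<m. \<Sum>q'<m. cnj (tvec m A K v $ (i*m+p')) * X $$ (i*m+p', j*m+q') * tvec m A K v $ (j*m+q'))" .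
  qed
  also have "\<dots> = (\<Sum>i<K. \<Sum>p'<m. \<Sum>j<K. \<Sum>q'<m.
        cnj (tvec m A K v $ (i*m+p')) * X $$ (i*m+p', j*m+q') * tvec m A K v $ (j*m+q'))"
    by (rule sum.cong[OF refl], rule sum.swap)
  also have "\<dots> = qform X (tvec m A K v)" by (rule qform_nm[OF w, symmetric])
  finally show ?thesis .
qed

lemma Ad_lin: assumes A: "A \<in> carrier_mat m m" shows "lin_map m m (Ad A)"
proof -
  have 1: "\<forall>X \<in> carrier_mat m m. Ad A X \<in> carrier_mat m m" using A by (simp add: Ad_def)
  have 2: "\<forall>X \<in> carrier_mat m m. \<forall>Y \<in> carrier_mat m m. Ad A (X + Y) = Ad A X + Ad A Y"
  proof (intro ballI)
    fix X Y :: "complex mat" assume X: "X \<in> carrier_mat m m" and Y: "Y \<in> carrier_mat m m"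
    show "Ad A (X + Y) = Ad A X + Ad A Y"
      using A X Y by (simp add: Ad_def mult_add_distrib_mat add_mult_distrib_mat[of _ m m _ _ m])
  qed
  have 3: "\<forall>X \<in> carrier_mat m m. \<forall>c::complex. Ad A (c \<cdot>\<^sub>m X) = c \<cdot>\<^sub>m Ad A X"
  proof (intro ballI allI)
    fix X :: "complex mat" and c :: complex assume X: "X \<in> carrier_mat m m"
    show "Ad A (c \<cdot>\<^sub>m X) = c \<cdot>\<^sub>m Ad A X"
      using A X by (simp add: Ad_def mult_smult_distrib mult_smult_assoc_mat[of _ m m _ m])
  qed
  show ?thesis unfolding lin_map_def using 1 2 3 by blast
qed

lemma Ad_cp: assumes A: "A \<in> carrier_mat m m" shows "compl_pos m (Ad A)"
  unfolding compl_pos_def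
proof (intro conjI allI impI)
  show "lin_map m m (Ad A)" by (rule Ad_lin[OF A])
  fix K X assume ps: "psd (K*m) X"
  have X: "X \<in> carrier_mat (K*m) (K*m)" using ps unfolding psd_def by auto
  have eq: "mat (K*m) (K*m) (\<lambda>(a,b). Ad A (mblock m X (a div m) (b div m)) $$ (a mod m, b mod m)) = blk m A K X"
    by (simp add: blk_def Ad_def)
  show "psd (K*m) (mat (K*m) (K*m) (\<lambda>(a,b). Ad A (mblock m X (a div m) (b div m)) $$ (a mod m, b mod m)))"
    unfolding eq psd_def
  proof (intro conjI ballI)
    show "blk m A K X \<in> carrier_mat (K*m) (K*m)" by (simp add: blk_def)
    fix v :: "complex vec" assume v: "v \<in> carrier_vec (K*m)"
    have "tvec m A K v \<in> carrier_vec (K*m)" by (simp add: tvec_def)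
    then show "qform (blk m A K X) v \<ge> 0" using qform_blk[OF A X v] ps unfolding psd_def by auto
  qed
qed

lemma mblock_choi:
  assumes lin: "lin_map n m \<Phi>" and ij: "i < n" "j < n"
  shows "mblock m (choi n m \<Phi>) i j = \<Phi> (munit n i j)"
proof -
  have c: "\<Phi> (munit n i j) \<in> carrier_mat m m" using lin unfolding lin_map_def by (auto simp: munit_def)
  show ?thesis
  proof (rule eq_matI)
    fix p q assume "p < dim_row (\<Phi> (munit n i j))" "q < dim_col (\<Phi> (munit n i j))"
    then have pq: "p < m" "q < m" using c by auto
    show "mblock m (choi n m \<Phi>) i j $$ (p,q) = \<Phi> (munit n i j) $$ (p,q)"
      using pq ij im_less[of i n p m] im_less[of j n q m] by (simp add: mblock_def choi_def divmod_im)
  qed (use c in \<open>auto simp: mblock_def\<close>)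
qed

lemma choi_Ad:
  assumes lin: "lin_map n m \<Phi>"
  shows "choi n m (Ad A \<circ> \<Phi>) = blk m A n (choi n m \<Phi>)"
proof (rule eq_matI)
  fix a b assume "a < dim_row (blk m A n (choi n m \<Phi>))" "b < dim_col (blk m A n (choi n m \<Phi>))"
  then have ab: "a < n * m" "b < n * m" by (auto simp: blk_def)
  have "a div m < n" "b div m < n" using ab by (auto simp: less_mult_imp_div_less)
  then show "choi n m (Ad A \<circ> \<Phi>) $$ (a,b) = blk m A n (choi n m \<Phi>) $$ (a,b)"
    using ab mblock_choi[OF lin] by (simp add: choi_def blk_def Ad_def)
qed (auto simp: blk_def choi_def)

lemma adm_int:
  "admissible n m (real k + 1) \<psi> \<longleftrightarrow> \<psi> \<in> carrier_vec (n*m) \<and> (\<Sum>i<n*m. (cmod (\<psi> $ i))\<^sup>2) = 1 \<and>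
     (\<forall>j. k + 2 \<le> j \<and> j \<le> min n m \<longrightarrow> schmidt n m \<psi> j = 0)"
proof -
  have f: "nat \<lfloor>real k + 1\<rfloor> = k + 1" by (metis floor_of_nat nat_int of_nat_Suc Suc_eq_plus1 add.commute)
  have c: "nat \<lceil>real k + 1\<rceil> = k + 1" by (metis ceiling_of_nat nat_int of_nat_Suc Suc_eq_plus1 add.commute)
  show ?thesis unfolding admissible_def Let_def f c by auto
qed

lemma adm_frac:
  assumes "0 < \<theta>" "\<theta> < 1"
  shows "admissible n m (real k + \<theta>) \<psi> \<longleftrightarrow> \<psi> \<in> carrier_vec (n*m) \<and> (\<Sum>i<n*m. (cmod (\<psi> $ i))\<^sup>2) = 1 \<and>
     (\<forall>j. k + 2 \<le> j \<and> j \<le> min n m \<longrightarrow> schmidt n m \<psi> j = 0) \<and>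
     schmidt n m \<psi> (k + 1) \<le> \<theta> / real k * (\<Sum>j=1..k. schmidt n m \<psi> j)"
proof -
  have "\<lfloor>real k + \<theta>\<rfloor> = int k" using assms by (subst floor_eq_iff) auto
  then have f: "nat \<lfloor>real k + \<theta>\<rfloor> = k" by simp
  have "\<lceil>real k + \<theta>\<rceil> = int k + 1" using assms by (subst ceiling_eq_iff) auto
  then have c: "nat \<lceil>real k + \<theta>\<rceil> = k + 1" by simp
  show ?thesis unfolding admissible_def Let_def f c using assms by auto
qed

lemma schmidt_val:
  "1 \<le> j \<Longrightarrow> j \<le> min n m \<Longrightarrow>
   schmidt n m \<psi> j = sqrt (eigs_desc (coeff_mat n m \<psi> * cadj (coeff_mat n m \<psi>)) ! (j - 1))"
  by (simp add: schmidt_def Let_def)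

lemma coeff_carrier[simp]: "coeff_mat n m \<psi> \<in> carrier_mat n m" by (simp add: coeff_mat_def)

lemma idx_facts:
  assumes "a < n * (m::nat)"
  shows "a div m < n" "a mod m < m" "a div m * m + a mod m = a"
proof -
  have m: "m > 0" using assms by (cases m) auto
  show "a div m < n" using assms by (simp add: less_mult_imp_div_less)
  show "a mod m < m" using m by simp
  show "a div m * m + a mod m = a" by simp
qed

lemma part2:
  fixes n m k :: nat and th :: real and Phi :: "complex mat => complex mat"
  assumes k1: "1 <= k" and kd: "k <= min n m - 1" and th0: "0 < th" and th1: "th < 1"
    and P: "beta_pos n m (real k + th) Phi" and nP: "~ beta_pos n m (real k + 1) Phi"
  shows "EX A : carrier_mat m m. ~ beta_pos n m (real k + th) (Ad A o Phi)"
proof -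
  have hp: "herm_pres n m Phi" using P unfolding beta_pos_def by auto
  have lin: "lin_map n m Phi" using hp unfolding herm_pres_def by auto
  obtain psi where adm: "admissible n m (real k + 1) psi" and neg: "~ qform (choi n m Phi) psi >= 0"
    using nP hp unfolding beta_pos_def by auto
  have psi: "psi : carrier_vec (n*m)" and sch0: "ALL j. k+2 <= j & j <= min n m --> schmidt n m psi j = 0"
    using adm unfolding adm_int by auto
  have km: "k < m" "k < n" using kd k1 by auto
  define M where "M = coeff_mat n m psi"
  have M: "M : carrier_mat n m" by (simp add: M_def)
  define L where "L = eigs_desc (M * cadj M)"
  obtain U where uU: "unitary n U" and lL: "length L = n" and Lnn: "ALL l<n. L!l >= 0"
     and rank: "ALL l. m <= l & l < n --> L!l = 0"
     and Nent: "ALL l<n. ALL l'<n. (SUM q<m. (cadj U * M) $$ (l,q) * cnj ((cadj U * M) $$ (l',q))) = (if l = l' then complex_of_real (L!l) else 0)"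
     and MUN: "M = U * (cadj U * M)"
    using schmidt_decomp[OF M] unfolding L_def by blast
  have U: "U : carrier_mat n n" using uU unfolding unitary_def by auto
  define N where "N = cadj U * M"
  have N: "N : carrier_mat n m" unfolding N_def using mult_carrier_gen[OF cadj_carrier[OF U] M] .
  have Lz: "L ! l = 0" if "k < l" "l < n" for l
  proof (cases "l < min n m")
    case True
    then have "schmidt n m psi (l+1) = 0" using sch0 that by auto
    then have "sqrt (L ! l) = 0" using schmidt_val[of "l+1" n m psi] True unfolding L_def M_def by simp
    then show ?thesis by simp
  next
    case False
    then show ?thesis using rank that by auto
  qed
  have Nz: "N $$ (l,q) = 0" if "k < l" "l < n" "q < m" for l q
  proof -
    have "(SUM q<m. N $$ (l,q) * cnj (N $$ (l,q))) = complex_of_real (L ! l)"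
      using Nent that unfolding N_def by auto
    then have "(SUM q<m. complex_of_real ((cmod (N $$ (l,q)))^2)) = complex_of_real (L ! l)"
      by (simp only: cnj_mult_self)
    then have "(SUM q<m. (cmod (N $$ (l,q)))^2) = 0" using Lz[OF that(1,2)] unfolding of_real_sum[symmetric] of_real_eq_iff by simp
    then have "(cmod (N $$ (l,q)))^2 = 0" using that(3) by (subst (asm) sum_nonneg_eq_0_iff) auto
    then show ?thesis by simp
  qed
  define s0 where "s0 = sqrt (real k + th^2)"
  have s0: "s0 > 0" using k1 unfolding s0_def by (simp add: add_pos_nonneg)
  define dd where "dd l = (if l < k then 1 / s0 else if l = k then th / s0 else 0)" for l
  have dd_pos: "dd l > 0" if "l <= k" for l using that s0 th0 by (auto simp: dd_def)
  define D where "D = mat n m (%(l,p). if p = l then complex_of_real (dd l) else 0)"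
  have D: "D : carrier_mat n m" by (simp add: D_def)
  define Bt where "Bt = mat m m (%(p,q). if p <= k then N $$ (p,q) / complex_of_real (dd p) else 0)"
  have Bt: "Bt : carrier_mat m m" by (simp add: Bt_def)
  have DB: "D * Bt = N"
  proof (rule eq_matI)
    fix l q assume "l < dim_row N" "q < dim_col N"
    then have lq: "l < n" "q < m" using N by auto
    have "(D * Bt) $$ (l,q) = (SUM p<m. D $$ (l,p) * Bt $$ (p,q))" by (rule mult_idx[OF D Bt lq])
    also have "... = (SUM p<m. if p = l then complex_of_real (dd l) * Bt $$ (l,q) else 0)"
      using lq by (intro sum.cong refl) (auto simp: D_def)
    also have "... = (if l < m then complex_of_real (dd l) * Bt $$ (l,q) else 0)" by simp
    also have "... = N $$ (l,q)"
    proof (cases "l <= k")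
      case True
      then have "l < m" using km by simp
      then show ?thesis using True lq dd_pos[OF True] by (simp add: Bt_def)
    next
      case False
      then show ?thesis using Nz[of l q] lq by (auto simp: dd_def)
    qed
    finally show "(D * Bt) $$ (l,q) = N $$ (l,q)" .
  qed (use D Bt N in auto)
  define M' where "M' = U * D"
  have M': "M' : carrier_mat n m" unfolding M'_def using mult_carrier_gen[OF U D] .
  define psi' where "psi' = vec (n*m) (%a. M' $$ (a div m, a mod m))"
  have psi': "psi' : carrier_vec (n*m)" by (simp add: psi'_def)
  have cM': "coeff_mat n m psi' = M'"
  proof (rule eq_matI)
    fix i q assume "i < dim_row M'" "q < dim_col M'"
    then have iq: "i < n" "q < m" using M' by auto
    show "coeff_mat n m psi' $$ (i,q) = M' $$ (i,q)" using iq im_less[OF iq] by (simp add: coeff_mat_def psi'_def divmod_im)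
  qed (use M' in \<open>auto simp: coeff_mat_def\<close>)
  define A where "A = mat m m (%(p,q). cnj (Bt $$ (p,q)))"
  have A: "A : carrier_mat m m" by (simp add: A_def)
  have tv: "tvec m A n psi' = psi"
  proof (rule eq_vecI)
    fix a assume "a < dim_vec psi"
    then have a: "a < n*m" using psi by simp
    note ix = idx_facts[OF a]
    have "tvec m A n psi' $ a = (SUM q<m. cnj (A $$ (q, a mod m)) * psi' $ (a div m * m + q))"
      using a by (simp add: tvec_def)
    also have "... = (SUM q<m. M' $$ (a div m, q) * Bt $$ (q, a mod m))"
      using ix im_less[of "a div m" n _ m] by (intro sum.cong refl) (auto simp: A_def psi'_def divmod_im mult.commute)
    also have "... = (M' * Bt) $$ (a div m, a mod m)" by (rule mult_idx[OF M' Bt ix(1,2), symmetric])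
    also have "M' * Bt = U * (D * Bt)" unfolding M'_def by (rule assoc_mult_mat[OF U D Bt])
    also have "... = M" using MUN DB unfolding N_def by simp
    also have "M $$ (a div m, a mod m) = psi $ a" using ix by (simp add: M_def coeff_mat_def)
    finally show "tvec m A n psi' $ a = psi $ a" .
  qed (use psi in \<open>auto simp: tvec_def\<close>)
  have qeq: "qform (choi n m (Ad A o Phi)) psi' = qform (choi n m Phi) psi"
  proof -
    have C: "choi n m Phi : carrier_mat (n*m) (n*m)" by (simp add: choi_def)
    show ?thesis unfolding choi_Ad[OF lin] qform_blk[OF A C psi'] tv ..
  qed
  define Lst where "Lst = map (%l. (dd l)^2) [0..<n]"
  have DD: "D * cadj D = dmat n (%l. Lst ! l)"
  proof (rule eq_matI)
    fix l l' assume "l < dim_row (dmat n (%l. Lst ! l))" "l' < dim_col (dmat n (%l. Lst ! l))"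
    then have ll: "l < n" "l' < n" by (auto simp: dmat_def)
    have "(D * cadj D) $$ (l,l') = (SUM p<m. D $$ (l,p) * cnj (D $$ (l',p)))"
      using D ll by (subst mult_idx[of _ n m _ n]) auto
    also have "... = (SUM p<m. if p = l then (if l = l' then complex_of_real ((dd l)^2) else 0) else 0)"
      using ll by (intro sum.cong refl) (auto simp: D_def power2_eq_square)
    also have "... = (if l < m & l = l' then complex_of_real ((dd l)^2) else 0)" by simp
    also have "... = dmat n (%l. Lst ! l) $$ (l,l')"
      using ll km by (auto simp: dmat_def Lst_def dd_def)
    finally show "(D * cadj D) $$ (l,l') = dmat n (%l. Lst ! l) $$ (l,l')" .
  qed (use D in \<open>auto simp: dmat_def\<close>)
  have MM': "M' * cadj M' = U * dmat n (%l. Lst ! l) * cadj U"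
  proof -
    have "cadj M' = cadj D * cadj U" unfolding M'_def by (rule cadj_mult[OF U D])
    then have "M' * cadj M' = U * (D * (cadj D * cadj U))"
      unfolding M'_def using assoc_mult_mat[OF U D mult_carrier_gen[OF cadj_carrier[OF D] cadj_carrier[OF U]]] by simp
    also have "D * (cadj D * cadj U) = (D * cadj D) * cadj U"
      by (rule assoc_mult_mat[OF D cadj_carrier[OF D] cadj_carrier[OF U], symmetric])
    also have "U * (D * cadj D * cadj U) = U * (D * cadj D) * cadj U"
      by (rule assoc_mult_mat[OF U mult_carrier_gen[OF D cadj_carrier[OF D]] cadj_carrier[OF U], symmetric])
    finally show ?thesis unfolding DD .
  qed
  have sLst: "sorted_wrt (>=) Lst"
  proof -
    have "(dd j)^2 <= (dd i)^2" if "i < j" for i j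
    proof -
      have "0 <= dd j" "dd j <= dd i" using that s0 th0 th1 by (auto simp: dd_def divide_right_mono)
      then show ?thesis by (simp add: power_mono)
    qed
    then show ?thesis unfolding Lst_def by (auto simp: sorted_wrt_iff_nth_less)
  qed
  have eL: "eigs_desc (coeff_mat n m psi' * cadj (coeff_mat n m psi')) = Lst"
    unfolding cM' MM' using eigs_desc_unitary[OF uU _ sLst] by (simp add: Lst_def)
  have schv: "schmidt n m psi' j = dd (j - 1)" if "1 <= j" "j <= min n m" for j
  proof -
    have jn: "j - 1 < n" using that by auto
    have "schmidt n m psi' j = sqrt (Lst ! (j - 1))" using schmidt_val[OF that] eL by simp
    moreover have "Lst ! (j - 1) = (dd (j - 1))^2" using jn unfolding Lst_def by simp
    moreover have "dd (j - 1) >= 0" using s0 th0 by (simp add: dd_def)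
    ultimately show ?thesis by simp
  qed
  have norm1: "(SUM i<n*m. (cmod (psi' $ i))^2) = 1"
  proof -
    obtain U2 where tr: "(SUM l<n. eigs_desc (M' * cadj M') ! l) = (SUM i<n. SUM q<m. (cmod (M' $$ (i,q)))^2)"
      using schmidt_decomp[OF M'] by blast
    have "(SUM i<n*m. (cmod (psi' $ i))^2) = (SUM i<n. SUM q<m. (cmod (M' $$ (i,q)))^2)"
      using im_less by (simp add: sum_nm psi'_def divmod_im)
    also have "... = (SUM l<n. Lst ! l)" using tr eL unfolding cM' by simp
    also have "... = (SUM l<n. (dd l)^2)" by (simp add: Lst_def)
    also have "... = 1"
    proof -
      have nk: "n = Suc k + (n - Suc k)" using km by simp
      have s2: "s0^2 = real k + th^2" unfolding s0_def by (simp add: add_nonneg_nonneg)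
      have pos: "real k + th^2 > 0" using k1 by (simp add: add_pos_nonneg)
      have "(SUM l<n. (dd l)^2) = (SUM l<Suc k. (dd l)^2) + (SUM q<n - Suc k. (dd (Suc k + q))^2)"
        by (subst nk, rule sum_add_split)
      also have "(SUM q<n - Suc k. (dd (Suc k + q))^2) = 0" by (simp add: dd_def)
      also have "(SUM l<Suc k. (dd l)^2) = (SUM l<k. (dd l)^2) + (dd k)^2" by simp
      also have "(SUM l<k. (dd l)^2) = real k / s0^2" by (simp add: dd_def power_divide)
      also have "(dd k)^2 = th^2 / s0^2" by (simp add: dd_def power_divide)
      finally have "(SUM l<n. (dd l)^2) = real k / s0^2 + th^2 / s0^2" by simp
      also have "... = (real k + th^2) / s0^2" by (simp add: add_divide_distrib)
      also have "... = 1" using s2 pos by simp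
      finally show ?thesis .
    qed
    finally show ?thesis .
  qed
  have kd': "k + 1 <= min n m" using km by simp
  have adm': "admissible n m (real k + th) psi'"
    unfolding adm_frac[OF th0 th1]
  proof (intro conjI allI impI)
    show "psi' : carrier_vec (n*m)" by (rule psi')
    show "(SUM i<n*m. (cmod (psi' $ i))^2) = 1" by (rule norm1)
  next
    fix j assume "k + 2 <= j & j <= min n m"
    then show "schmidt n m psi' j = 0" using schv[of j] by (auto simp: dd_def)
  next
    have "schmidt n m psi' (k + 1) = th / s0" using schv[of "k+1"] kd' by (simp add: dd_def)
    moreover have "(SUM j=1..k. schmidt n m psi' j) = real k / s0"
    proof -
      have "(SUM j=1..k. schmidt n m psi' j) = (SUM j=1..k. 1 / s0)"
        using schv kd' by (intro sum.cong refl) (auto simp: dd_def)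
      then show ?thesis by simp
    qed
    ultimately show "schmidt n m psi' (k + 1) <= th / real k * (SUM j=1..k. schmidt n m psi' j)"
      using k1 by simp
  qed
  have "~ beta_pos n m (real k + th) (Ad A o Phi)"
    unfolding beta_pos_def using adm' qeq neg by auto
  then show ?thesis using A by blast
qed

definition mtr :: "complex mat => complex" where "mtr X = (SUM i<dim_row X. X $$ (i,i))"

definition Phi0 :: "nat => nat => real => complex mat => complex mat" where
  "Phi0 m r c X = mat m m (%(p,q). (if p = q then mtr X else 0) - complex_of_real c * (if p < r & q < r then X $$ (p,q) else 0))"

lemma Phi0_lin:
  assumes "r <= n"
  shows "lin_map n m (Phi0 m r c)"
proof -
  have 1: "ALL X : carrier_mat n n. Phi0 m r c X : carrier_mat m m" by (simp add: Phi0_def)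
  have 2: "ALL X : carrier_mat n n. ALL Y : carrier_mat n n. Phi0 m r c (X + Y) = Phi0 m r c X + Phi0 m r c Y"
  proof (intro ballI)
    fix X Y :: "complex mat" assume X: "X : carrier_mat n n" and Y: "Y : carrier_mat n n"
    have tr: "mtr (X + Y) = mtr X + mtr Y" using X Y by (simp add: mtr_def sum.distrib)
    show "Phi0 m r c (X + Y) = Phi0 m r c X + Phi0 m r c Y"
      by (rule eq_matI) (use X Y assms tr in \<open>auto simp: Phi0_def algebra_simps\<close>)
  qed
  have 3: "ALL X : carrier_mat n n. ALL a::complex. Phi0 m r c (a \<cdot>\<^sub>m X) = a \<cdot>\<^sub>m Phi0 m r c X"
  proof (intro ballI allI)
    fix X :: "complex mat" and a :: complex assume X: "X : carrier_mat n n"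
    have tr: "mtr (a \<cdot>\<^sub>m X) = a * mtr X" using X by (simp add: mtr_def sum_distrib_left)
    show "Phi0 m r c (a \<cdot>\<^sub>m X) = a \<cdot>\<^sub>m Phi0 m r c X"
      by (rule eq_matI) (use X assms tr in \<open>auto simp: Phi0_def algebra_simps\<close>)
  qed
  show ?thesis unfolding lin_map_def using 1 2 3 by blast
qed

lemma Phi0_herm:
  assumes "r <= n"
  shows "herm_pres n m (Phi0 m r c)"
  unfolding herm_pres_def
proof (intro conjI ballI impI)
  show "lin_map n m (Phi0 m r c)" by (rule Phi0_lin[OF assms])
  fix X assume X: "X : carrier_mat n n" and h: "cadj X = X"
  have cx: "cnj (X $$ (q,p)) = X $$ (p,q)" if "p < n" "q < n" for p q
  proof -
    have "cadj X $$ (p,q) = cnj (X $$ (q,p))" using X that by simp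
    then show ?thesis using h by simp
  qed
  have ctr: "cnj (mtr X) = mtr X" using X cx by (simp add: mtr_def)
  show "cadj (Phi0 m r c X) = Phi0 m r c X"
    by (rule eq_matI) (use X ctr cx assms in \<open>auto simp: Phi0_def cadj_def\<close>)
qed

definition diagS :: "nat => nat => nat set" where "diagS m r = (%i. i * m + i) ` {..<r}"

lemma inj_diag: "inj_on (%i. i * m + i) {..<(r::nat)}"
proof (rule inj_onI)
  have mono: "i * m + i < j * m + j" if "i < j" for i j :: nat
    using that by (intro add_le_less_mono mult_le_mono1) auto
  fix i j assume "i * m + i = j * m + (j::nat)"
  then show "i = j" using mono[of i j] mono[of j i] by (cases i j rule: linorder_cases) auto
qed

lemma diagS_iff:
  assumes "r <= m" "a < n * m"
  shows "a : diagS m r \<longleftrightarrow> a mod m < r & a div m = a mod m"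
proof
  assume "a : diagS m r"
  then obtain i where i: "i < r" "a = i * m + i" unfolding diagS_def by auto
  then have "i < m" using assms by simp
  then show "a mod m < r & a div m = a mod m" using i by (simp add: divmod_im)
next
  assume h: "a mod m < r & a div m = a mod m"
  have "a = a div m * m + a mod m" by simp
  then have "a = (a mod m) * m + a mod m" using h by simp
  then show "a : diagS m r" unfolding diagS_def using h by blast
qed

lemma diagS_sub: "r <= m ==> r <= n ==> diagS m r <= {..<n*m}"
  unfolding diagS_def using im_less by fastforce

lemma choi_Phi0:
  assumes "r <= n" "r <= m"
  shows "choi n m (Phi0 m r c) = mat (n*m) (n*m) (%(a,b). (if a = b then 1 else 0)
      - complex_of_real c * (if a : diagS m r & b : diagS m r then 1 else 0))"
proof (rule eq_matI)
  fix a b assume "a < dim_row (mat (n*m) (n*m) (%(a,b). (if a = b then 1 else 0)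
      - complex_of_real c * (if a : diagS m r & b : diagS m r then 1 else 0)))"
    "b < dim_col (mat (n*m) (n*m) (%(a,b). (if a = b then 1 else 0)
      - complex_of_real c * (if a : diagS m r & b : diagS m r then 1 else 0)))"
  then have ab: "a < n*m" "b < n*m" by auto
  note ia = idx_facts[OF ab(1)] and ib = idx_facts[OF ab(2)]
  have tr: "mtr (munit n (a div m) (b div m)) = (if a div m = b div m then 1 else 0)"
    using ia ib by (simp add: mtr_def munit_def)
  have e1: "(a div m = b div m & a mod m = b mod m) = (a = b)"
    using ia(3) ib(3) by metis
  show "choi n m (Phi0 m r c) $$ (a,b) = mat (n*m) (n*m) (%(a,b). (if a = b then 1 else 0)
      - complex_of_real c * (if a : diagS m r & b : diagS m r then 1 else 0)) $$ (a,b)"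
  proof -
    have L: "choi n m (Phi0 m r c) $$ (a,b) = (if a mod m = b mod m then mtr (munit n (a div m) (b div m)) else 0)
        - complex_of_real c * (if a mod m < r & b mod m < r then munit n (a div m) (b div m) $$ (a mod m, b mod m) else 0)"
      using ab ia ib by (simp add: choi_def Phi0_def)
    have 1: "(if a mod m = b mod m then mtr (munit n (a div m) (b div m)) else 0) = (if a = b then 1 else 0)"
      using tr e1 by auto
    have 2: "(if a mod m < r & b mod m < r then munit n (a div m) (b div m) $$ (a mod m, b mod m) else 0)
        = (if a : diagS m r & b : diagS m r then 1 else 0)"
      using diagS_iff[OF assms(2) ab(1)] diagS_iff[OF assms(2) ab(2)] assms ia ib by (auto simp: munit_def)
    show ?thesis unfolding L 1 2 using ab by simp
  qed
qed (auto simp: choi_def)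

lemma qform_Phi0:
  assumes "r <= n" "r <= m" "v : carrier_vec (n*m)"
  shows "qform (choi n m (Phi0 m r c)) v =
     (SUM a<n*m. cnj (v $ a) * v $ a) - complex_of_real c * (cnj (SUM i<r. v $ (i*m+i)) * (SUM i<r. v $ (i*m+i)))"
proof -
  let ?S = "diagS m r"
  have Ssub: "?S <= {..<n*m}" by (rule diagS_sub[OF assms(2,1)])
  have dv: "dim_vec v = n*m" using assms(3) by simp
  have "qform (choi n m (Phi0 m r c)) v = (SUM a<n*m. SUM b<n*m.
      (if a = b then cnj (v $ a) * v $ b else 0) - complex_of_real c * (if a : ?S & b : ?S then cnj (v $ a) * v $ b else 0))"
    unfolding qform_def choi_Phi0[OF assms(1,2)] dv by (intro sum.cong refl) (auto simp: algebra_simps)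
  also have "... = (SUM a<n*m. SUM b<n*m. (if a = b then cnj (v $ a) * v $ b else 0))
      - complex_of_real c * (SUM a<n*m. SUM b<n*m. (if a : ?S & b : ?S then cnj (v $ a) * v $ b else 0))"
    by (simp add: sum_subtractf sum_distrib_left)
  also have "(SUM a<n*m. SUM b<n*m. (if a = b then cnj (v $ a) * v $ b else 0)) = (SUM a<n*m. cnj (v $ a) * v $ a)"
    by (intro sum.cong refl) (simp add: sum.delta)
  also have "(SUM a<n*m. SUM b<n*m. (if a : ?S & b : ?S then cnj (v $ a) * v $ b else 0))
      = (SUM a<n*m. if a : ?S then cnj (v $ a) * (SUM b<n*m. if b : ?S then v $ b else 0) else 0)"
    by (intro sum.cong refl) (auto simp: sum_distrib_left intro!: sum.cong)
  also have "... = (SUM a:?S. cnj (v $ a)) * (SUM b:?S. v $ b)"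
  proof -
    have 1: "(SUM b<n*m. if b : ?S then v $ b else 0) = (SUM b:?S. v $ b)"
      using Ssub by (simp add: sum.If_cases Int_absorb1)
    have 2: "(SUM a<n*m. if a : ?S then cnj (v $ a) * (SUM b:?S. v $ b) else 0) = (SUM a:?S. cnj (v $ a) * (SUM b:?S. v $ b))"
      using Ssub by (simp add: sum.If_cases Int_absorb1)
    show ?thesis unfolding 1 2 by (simp add: sum_distrib_right)
  qed
  also have "(SUM b:?S. v $ b) = (SUM i<r. v $ (i*m+i))"
    unfolding diagS_def by (subst sum.reindex[OF inj_diag]) simp
  also have "(SUM a:?S. cnj (v $ a)) = cnj (SUM i<r. v $ (i*m+i))"
    unfolding diagS_def by (subst sum.reindex[OF inj_diag]) (simp add: cnj_sum)
  finally show ?thesis .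
qed

lemma complex_of_real_ge0: "x >= 0 ==> complex_of_real x >= 0"
  by (simp add: less_eq_complex_def)

lemma Phi0_pos:
  fixes n m k :: nat and th c :: real
  assumes k1: "1 <= k" and kd: "k <= min n m - 1" and th0: "0 < th" and th1: "th < 1"
    and cdef: "c = (real k + th^2) / (real k + th)^2"
  shows "beta_pos n m (real k + th) (Phi0 m (Suc k) c)"
  unfolding beta_pos_def
proof (intro conjI allI impI)
  have km: "k < m" "k < n" using kd k1 by auto
  show "herm_pres n m (Phi0 m (Suc k) c)" using km by (intro Phi0_herm) simp
  fix psi assume adm: "admissible n m (real k + th) psi"
  have psi: "psi : carrier_vec (n*m)" and nrm: "(SUM i<n*m. (cmod (psi $ i))^2) = 1"
    and sch0: "ALL j. k + 2 <= j & j <= min n m --> schmidt n m psi j = 0"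
    and schk: "schmidt n m psi (k + 1) <= th / real k * (SUM j=1..k. schmidt n m psi j)"
    using adm unfolding adm_frac[OF th0 th1] by auto
  define M where "M = coeff_mat n m psi"
  have M: "M : carrier_mat n m" by (simp add: M_def)
  define L where "L = eigs_desc (M * cadj M)"
  obtain U where uU: "unitary n U" and lL: "length L = n" and Lnn: "ALL l<n. L!l >= 0"
     and rank: "ALL l. m <= l & l < n --> L!l = 0"
     and Nent: "ALL l<n. ALL l'<n. (SUM q<m. (cadj U * M) $$ (l,q) * cnj ((cadj U * M) $$ (l',q))) = (if l = l' then complex_of_real (L!l) else 0)"
     and MUN: "M = U * (cadj U * M)"
     and trace: "(SUM l<n. L ! l) = (SUM i<n. SUM q<m. (cmod (M $$ (i,q)))^2)"
    using schmidt_decomp[OF M] unfolding L_def by blast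
  have U: "U : carrier_mat n n" using uU unfolding unitary_def by auto
  define N where "N = cadj U * M"
  have N: "N : carrier_mat n m" unfolding N_def using mult_carrier_gen[OF cadj_carrier[OF U] M] .
  have schv: "schmidt n m psi j = sqrt (L ! (j - 1))" if "1 <= j" "j <= min n m" for j
    using schmidt_val[OF that] unfolding L_def M_def by simp
  have Lz: "L ! l = 0" if "k < l" "l < n" for l
  proof (cases "l < min n m")
    case True
    then have "schmidt n m psi (l+1) = 0" using sch0 that by auto
    then have "sqrt (L ! l) = 0" using schv[of "l+1"] True by simp
    then show ?thesis by simp
  next
    case False
    then show ?thesis using rank that by auto
  qed
  have Lsq: "L ! l = (SUM q<m. (cmod (N $$ (l,q)))^2)" if "l < n" for l
  proof -
    have "(SUM q<m. N $$ (l,q) * cnj (N $$ (l,q))) = complex_of_real (L ! l)"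
      using Nent that unfolding N_def by auto
    then have "(SUM q<m. complex_of_real ((cmod (N $$ (l,q)))^2)) = complex_of_real (L ! l)"
      by (simp only: cnj_mult_self)
    then show ?thesis unfolding of_real_sum[symmetric] of_real_eq_iff by simp
  qed
  define T where "T = (SUM i<Suc k. psi $ (i*m+i))"
  have Mii: "M $$ (i,i) = (SUM l<n. U $$ (i,l) * N $$ (l,i))" if "i < Suc k" for i
  proof -
    have i: "i < n" "i < m" using that km by auto
    have "M $$ (i,i) = (U * N) $$ (i,i)" using MUN unfolding N_def by simp
    also have "... = (SUM l<n. U $$ (i,l) * N $$ (l,i))" by (rule mult_idx[OF U N i])
    finally show ?thesis .
  qed
  have "T = (SUM i<Suc k. M $$ (i,i))"
    unfolding T_def M_def using km by (intro sum.cong refl) (auto simp: coeff_mat_def)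
  also have "... = (SUM i<Suc k. SUM l<n. U $$ (i,l) * N $$ (l,i))" using Mii by simp
  also have "... = (SUM l<n. SUM i<Suc k. U $$ (i,l) * N $$ (l,i))" by (rule sum.swap)
  finally have Teq: "T = (SUM l<n. SUM i<Suc k. U $$ (i,l) * N $$ (l,i))" .
  have bnd: "cmod (SUM i<Suc k. U $$ (i,l) * N $$ (l,i)) <= sqrt (L ! l)" if l: "l < n" for l
  proof -
    have u1: "(SUM i<n. (cmod (U $$ (i,l)))^2) = 1"
    proof -
      have "(SUM i<n. cnj (U $$ (i,l)) * U $$ (i,l)) = 1" using unitary_cols[OF uU l l] by simp
      then have "(SUM i<n. complex_of_real ((cmod (U $$ (i,l)))^2)) = complex_of_real 1"
        by (simp only: cnj_mult_self' of_real_1)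
      then show ?thesis unfolding of_real_sum[symmetric] of_real_eq_iff .
    qed
    have a: "(SUM i<Suc k. (cmod (U $$ (i,l)))^2) <= 1"
      using u1 km by (metis (no_types, lifting) finite_lessThan lessThan_subset_iff Suc_leI sum_mono2 zero_le_power2)
    have b: "(SUM i<Suc k. (cmod (N $$ (l,i)))^2) <= L ! l"
      using Lsq[OF l] km by (metis (no_types, lifting) finite_lessThan lessThan_subset_iff Suc_leI sum_mono2 zero_le_power2)
    have "cmod (SUM i<Suc k. U $$ (i,l) * N $$ (l,i)) <=
        sqrt (SUM i<Suc k. (cmod (U $$ (i,l)))^2) * sqrt (SUM i<Suc k. (cmod (N $$ (l,i)))^2)"
      by (rule cs_complex) simp
    also have "... <= 1 * sqrt (L ! l)"
    proof -
      have nn: "0 <= (SUM i<Suc k. (cmod (N $$ (l,i)))^2)" by (rule sum_nonneg) simp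
      have sa: "sqrt (SUM i<Suc k. (cmod (U $$ (i,l)))^2) <= 1" using a by (simp only: real_sqrt_le_1_iff)
      have sb: "sqrt (SUM i<Suc k. (cmod (N $$ (l,i)))^2) <= sqrt (L ! l)" using b by (simp only: real_sqrt_le_iff)
      have sc: "0 <= sqrt (SUM i<Suc k. (cmod (N $$ (l,i)))^2)" using nn by (simp only: real_sqrt_ge_zero)
      show ?thesis by (rule mult_mono[OF sa sb _ sc]) simp
    qed
    finally show ?thesis by simp
  qed
  define x where "x l = sqrt (L ! l)" for l
  have nk: "n = Suc k + (n - Suc k)" using km by simp
  have "cmod T <= (SUM l<n. cmod (SUM i<Suc k. U $$ (i,l) * N $$ (l,i)))" unfolding Teq by (rule norm_sum)
  also have "... <= (SUM l<n. x l)" unfolding x_def using bnd by (intro sum_mono) auto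
  also have "(SUM l<n. x l) = (SUM l<Suc k. x l) + (SUM q<n - Suc k. x (Suc k + q))"
    by (subst nk, rule sum_add_split)
  also have "(SUM q<n - Suc k. x (Suc k + q)) = 0" using Lz km unfolding x_def by (intro sum.neutral) auto
  finally have Tb: "cmod T <= (SUM l<Suc k. x l)" by simp
  have xnn: "x l >= 0" if "l <= k" for l unfolding x_def using Lnn km that by simp
  have s1: "(SUM l<Suc k. (x l)^2) = 1"
  proof -
    have "(SUM l<Suc k. (x l)^2) = (SUM l<Suc k. L ! l)"
      using Lnn km unfolding x_def by (intro sum.cong refl) auto
    also have "... = (SUM l<n. L ! l)"
    proof -
      have "(SUM l<n. L ! l) = (SUM l<Suc k. L ! l) + (SUM q<n - Suc k. L ! (Suc k + q))"
        by (subst nk, rule sum_add_split)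
      also have "(SUM q<n - Suc k. L ! (Suc k + q)) = 0" using Lz km by (intro sum.neutral) auto
      finally show ?thesis by simp
    qed
    also have "... = (SUM i<n. SUM q<m. (cmod (M $$ (i,q)))^2)" by (rule trace)
    also have "... = (SUM a<n*m. (cmod (psi $ a))^2)"
      unfolding sum_nm M_def using im_less by (intro sum.cong refl) (auto simp: coeff_mat_def)
    finally show ?thesis using nrm by simp
  qed
  have kd': "k + 1 <= min n m" using km by simp
  have xadm: "x k <= th / real k * (SUM l<k. x l)"
  proof -
    have "schmidt n m psi (k + 1) = x k" using schv[of "k+1"] kd' unfolding x_def by simp
    moreover have "(SUM j=1..k. schmidt n m psi j) = (SUM l<k. x l)"
    proof -
      have "(SUM j=1..k. schmidt n m psi j) = (SUM l<k. schmidt n m psi (Suc l))"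
        by (simp add: sum.atLeast1_atMost_eq)
      also have "... = (SUM l<k. x l)" using schv kd' unfolding x_def by (intro sum.cong refl) auto
      finally show ?thesis .
    qed
    ultimately show ?thesis using schk by simp
  qed
  have key: "(SUM l<Suc k. x l)^2 <= (real k + th)^2 / (real k + th^2)"
    by (rule key_ineq[OF k1 th0 th1 _ s1 xadm]) (simp add: xnn)
  have T2: "(cmod T)^2 <= (real k + th)^2 / (real k + th^2)"
    using Tb key by (meson norm_ge_zero order_trans power_mono)
  have c0: "c >= 0" unfolding cdef by (simp add: add_nonneg_nonneg)
  have pos1: "real k + th^2 > 0" using k1 by (simp add: add_pos_nonneg)
  have pos2: "(real k + th)^2 > 0" using th0 by simp
  have "c * (cmod T)^2 <= c * ((real k + th)^2 / (real k + th^2))" using T2 c0 by (rule mult_left_mono)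
  also have "... = 1" unfolding cdef using pos1 pos2 by simp
  finally have cT: "c * (cmod T)^2 <= 1" .
  have q: "qform (choi n m (Phi0 m (Suc k) c)) psi =
     (SUM a<n*m. cnj (psi $ a) * psi $ a) - complex_of_real c * (cnj T * T)"
    unfolding T_def by (rule qform_Phi0) (use km psi in auto)
  have e1: "(SUM a<n*m. cnj (psi $ a) * psi $ a) = complex_of_real 1"
    using nrm unfolding cnj_mult_self' of_real_sum[symmetric] by simp
  have e2: "cnj T * T = complex_of_real ((cmod T)^2)" by (rule cnj_mult_self')
  have qf: "qform (choi n m (Phi0 m (Suc k) c)) psi = complex_of_real (1 - c * (cmod T)^2)"
    unfolding q e1 e2 by simp
  have "complex_of_real (1 - c * (cmod T)^2) >= 0" by (rule complex_of_real_ge0) (use cT in simp)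
  then show "qform (choi n m (Phi0 m (Suc k) c)) psi >= 0" unfolding qf .
qed

lemma Phi0_notpos:
  fixes n m k :: nat and c :: real
  assumes k1: "1 <= k" and kd: "k <= min n m - 1" and c1: "c * (real k + 1) > 1"
  shows "~ beta_pos n m (real k + 1) (Phi0 m (Suc k) c)"
proof
  assume bp: "beta_pos n m (real k + 1) (Phi0 m (Suc k) c)"
  have km: "k < m" "k < n" using kd k1 by auto
  define r where "r = Suc k"
  have rm: "r <= m" "r <= n" using km by (auto simp: r_def)
  define S where "S = diagS m r"
  have Ssub: "S <= {..<n*m}" unfolding S_def by (rule diagS_sub[OF rm])
  have cS: "card S = r" unfolding S_def diagS_def by (simp add: card_image[OF inj_diag])
  have rpos: "real r > 0" by (simp add: r_def)
  define v where "v = complex_of_real (1 / sqrt (real r))"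
  define psi where "psi = vec (n*m) (%a. if a : S then v else 0)"
  have psi: "psi : carrier_vec (n*m)" by (simp add: psi_def)
  have cv: "(cmod v)^2 = 1 / real r" unfolding v_def norm_of_real power2_abs using rpos by (simp add: power_divide)
  have nrm: "(SUM a<n*m. (cmod (psi $ a))^2) = 1"
  proof -
    have "(SUM a<n*m. (cmod (psi $ a))^2) = (SUM a<n*m. if a : S then 1 / real r else 0)"
      using cv by (intro sum.cong refl) (auto simp: psi_def)
    also have "... = (SUM a:S. 1 / real r)" using Ssub by (simp add: sum.If_cases Int_absorb1)
    also have "... = 1" using cS rpos by simp
    finally show ?thesis .
  qed
  define f where "f l = (if l < r then 1 / real r else 0)" for l
  define M0 where "M0 = mat n m (%(i,q). if i = q & i < r then v else 0)"
  have cM: "coeff_mat n m psi = M0"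
  proof (rule eq_matI)
    fix i q assume "i < dim_row M0" "q < dim_col M0"
    then have iq: "i < n" "q < m" by (auto simp: M0_def)
    have a: "i * m + q < n * m" by (rule im_less[OF iq])
    have "(i * m + q : S) = (q < r & i = q)"
      unfolding S_def diagS_iff[OF rm(1) a] using iq by (simp add: divmod_im)
    then show "coeff_mat n m psi $$ (i,q) = M0 $$ (i,q)" using iq a by (auto simp: coeff_mat_def psi_def M0_def)
  qed (auto simp: coeff_mat_def M0_def)
  have MM: "M0 * cadj M0 = dmat n f"
  proof (rule eq_matI)
    fix l l' assume "l < dim_row (dmat n f)" "l' < dim_col (dmat n f)"
    then have ll: "l < n" "l' < n" by (auto simp: dmat_def)
    have M0c: "M0 : carrier_mat n m" by (simp add: M0_def)
    have "(M0 * cadj M0) $$ (l,l') = (SUM q<m. M0 $$ (l,q) * cnj (M0 $$ (l',q)))"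
      using M0c ll by (subst mult_idx[of _ n m _ n]) auto
    also have "... = (SUM q<m. if q = l then (if l = l' & l < r then v * cnj v else 0) else 0)"
      using ll by (intro sum.cong refl) (auto simp: M0_def)
    also have "... = (if l = l' & l < r then v * cnj v else 0)" using rm by auto
    also have "... = dmat n f $$ (l,l')"
      using ll cv by (auto simp: dmat_def f_def cnj_mult_self)
    finally show "(M0 * cadj M0) $$ (l,l') = dmat n f $$ (l,l')" .
  qed (auto simp: dmat_def M0_def)
  have sf: "sorted_wrt (>=) (map f [0..<n])"
    by (auto simp: sorted_wrt_iff_nth_less f_def)
  have eig: "eigs_desc (dmat n f) = map f [0..<n]"
  proof (rule eigs_desc_eq)
    show "length (map f [0..<n]) = dim_row (dmat n f)" by (simp add: dmat_def)
    show "sorted_wrt (>=) (map f [0..<n])" by (rule sf)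
    show "char_poly (dmat n f) = prod_list (map lfac (map f [0..<n]))" by (rule char_poly_dmat)
  qed
  have adm: "admissible n m (real k + 1) psi"
    unfolding adm_int
  proof (intro conjI allI impI)
    show "psi : carrier_vec (n*m)" by (rule psi)
    show "(SUM a<n*m. (cmod (psi $ a))^2) = 1" by (rule nrm)
    fix j assume j: "k + 2 <= j & j <= min n m"
    have "schmidt n m psi j = sqrt (map f [0..<n] ! (j - 1))"
      using schmidt_val[of j n m psi] j unfolding cM MM eig by simp
    also have "... = 0"
    proof -
      have jn: "j - 1 < n" using j by auto
      then have "map f [0..<n] ! (j - 1) = f (j - 1)" by simp
      moreover have "~ (j - 1 < r)" using j unfolding r_def by arith
      ultimately show ?thesis by (simp add: f_def)
    qed
    finally show "schmidt n m psi j = 0" .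
  qed
  have q: "qform (choi n m (Phi0 m (Suc k) c)) psi =
     (SUM a<n*m. cnj (psi $ a) * psi $ a) - complex_of_real c * (cnj (SUM i<r. psi $ (i*m+i)) * (SUM i<r. psi $ (i*m+i)))"
    unfolding r_def by (rule qform_Phi0) (use rm psi in \<open>auto simp: r_def\<close>)
  have e1: "(SUM a<n*m. cnj (psi $ a) * psi $ a) = complex_of_real 1"
    using nrm unfolding cnj_mult_self' of_real_sum[symmetric] by simp
  have T0: "(SUM i<r. psi $ (i*m+i)) = complex_of_real (real r * (1 / sqrt (real r)))"
  proof -
    have "(SUM i<r. psi $ (i*m+i)) = (SUM i<r. v)"
    proof (intro sum.cong refl)
      fix i assume i: "i : {..<r}"
      have "i * m + i : S" unfolding S_def diagS_def using i by blast
      moreover have "i * m + i < n * m" using i rm by (intro im_less) auto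
      ultimately show "psi $ (i*m+i) = v" by (simp add: psi_def)
    qed
    then show ?thesis by (simp add: v_def)
  qed
  have e2: "cnj (SUM i<r. psi $ (i*m+i)) * (SUM i<r. psi $ (i*m+i)) = complex_of_real (real r)"
  proof -
    have "cnj (SUM i<r. psi $ (i*m+i)) * (SUM i<r. psi $ (i*m+i)) = complex_of_real ((real r * (1 / sqrt (real r)))^2)"
      unfolding T0 by (simp only: cnj_mult_self' norm_of_real power2_abs)
    also have "(real r * (1 / sqrt (real r)))^2 = real r" using rpos by (simp add: power_divide power2_eq_square)
    finally show ?thesis .
  qed
  have "qform (choi n m (Phi0 m (Suc k) c)) psi = complex_of_real (1 - c * real r)"
    unfolding q e1 e2 by simp
  moreover have "1 - c * real r < 0" using c1 unfolding r_def by (simp add: add.commute)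
  ultimately have "~ qform (choi n m (Phi0 m (Suc k) c)) psi >= 0" by (simp add: less_eq_complex_def)
  then show False using bp adm unfolding beta_pos_def by blast
qed

theorem proposition3p12:
  fixes n m k :: nat and \<theta> :: real
  assumes "1 \<le> k" and "k \<le> min n m - 1" and "0 < \<theta>" and "\<theta> < 1"
  shows "(\<exists>\<Phi> \<Gamma>. beta_pos n m (real k + \<theta>) \<Phi> \<and> compl_pos m \<Gamma> \<and>
                 \<not> beta_pos n m (real k + \<theta>) (\<Gamma> \<circ> \<Phi>)) \<and>
         (\<forall>\<Phi>. beta_pos n m (real k + \<theta>) \<Phi> \<and> \<not> beta_pos n m (real k + 1) \<Phi> \<longrightarrow>
               (\<exists>A \<in> carrier_mat m m. \<not> beta_pos n m (real k + \<theta>) (Ad A \<circ> \<Phi>)))"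
proof
  show P2: "\<forall>\<Phi>. beta_pos n m (real k + \<theta>) \<Phi> \<and> \<not> beta_pos n m (real k + 1) \<Phi> \<longrightarrow>
               (\<exists>A \<in> carrier_mat m m. \<not> beta_pos n m (real k + \<theta>) (Ad A \<circ> \<Phi>))"
    using part2[OF assms] by blast
  define c where "c = (real k + \<theta>\<^sup>2) / (real k + \<theta>)\<^sup>2"
  have P: "beta_pos n m (real k + \<theta>) (Phi0 m (Suc k) c)"
    by (rule Phi0_pos[OF assms c_def])
  have "c * (real k + 1) > 1" unfolding c_def by (rule const_ineq) (use assms in auto)
  then have nP: "\<not> beta_pos n m (real k + 1) (Phi0 m (Suc k) c)"
    by (rule Phi0_notpos[OF assms(1,2)])
  obtain A where A: "A \<in> carrier_mat m m" and nA: "\<not> beta_pos n m (real k + \<theta>) (Ad A \<circ> Phi0 m (Suc k) c)"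
    using P2 P nP by blast
  show "\<exists>\<Phi> \<Gamma>. beta_pos n m (real k + \<theta>) \<Phi> \<and> compl_pos m \<Gamma> \<and>
                 \<not> beta_pos n m (real k + \<theta>) (\<Gamma> \<circ> \<Phi>)"
    using P Ad_cp[OF A] nA by blast
qed

end
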